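(* Let $\omega=(\alpha,\beta,\delta)\in\Omega$, let $N\ge1$ and $a\in\{-1/2,1/2\}$. Then for every $\lambda=(\lambda_1\ge\dots\ge\lambda_N\ge0)\in\mathbb{J}_N$, \[ P^{\omega}_{N,a}(\lambda)=C_{N,a}\cdot\det\bigl[f_j^{(N,a)}(\lambda_i-i+N)\bigr]_{1\le i,j\le N}\cdot \dim_{SO(2N+1/2+a)}\lambda , \] where \[ f_j^{(N,a)}(k)=\frac{W^{(a,-1/2)}(k)}{\pi}\int_{-1}^1 x^{N-j}E^{\omega}(x)\,\mathsf{J}_k^{(a,-1/2)}(x)\,(1-x)^{a}(1+x)^{-1/2}\,dx \] and $C_{N,1/2}=2^{(N-1)N/2}$, $C_{N,-1/2}=2^{(N-2)(N-1)/2}$. (Here $SO(2N+1/2+a)$ means $SO(2N+1)$ for $a=1/2$ and $SO(2N)$ for $a=-1/2$.)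
   Context: Polynomials: for $s\in\mathbb{Z}_{\ge0}$ and $x=\cos\theta\in[-1,1]$ put $\mathsf{J}^{(-1/2,-1/2)}_s(\cos\theta)=\cos(s\theta)$ and $\mathsf{J}^{(1/2,-1/2)}_s(\cos\theta)=\sin((s+\tfrac12)\theta)/\sin(\theta/2)$ (these are Jacobi polynomials $J^{(a,-1/2)}_s$ divided by $c_s$, $c_0=1$, $c_s=\frac{1\cdot3\cdots(2s-1)}{2\cdot4\cdots(2s)}$); equivalently $\mathsf{J}_s^{(-1/2,-1/2)}(\frac{z+z^{-1}}2)=\frac{z^s+z^{-s}}2$, $\mathsf{J}_s^{(1/2,-1/2)}(\frac{z+z^{-1}}2)=\frac{z^{s+1/2}-z^{-s-1/2}}{z^{1/2}-z^{-1/2}}$. Weights: $W^{(-1/2,-1/2)}(0)=1$, $W^{(-1/2,-1/2)}(s)=2$ for $s>0$, $W^{(1/2,-1/2)}(s)=1$ for all $s\ge0$. Parameters: $\Omega$ is the set of triples $(\alpha,\beta,\delta)$ with $\alpha_1\ge\alpha_2\ge\dots\ge0$, $\beta_1\ge\beta_2\ge\dots\ge0$, $\delta\in\mathbb{R}$, $\sum_i(\alpha_i+\beta_i)\le\delta$; put $\gamma=\delta-\sum_i(\alpha_i+\beta_i)\ge0$ and \[E^{\omega}(x)=e^{\gamma(x-1)}\prod_{i\ge1}\frac{1-\beta_i(1-x)+\beta_i^2(1-x)/2}{1+\alpha_i(1-x)+\alpha_i^2(1-x)/2}.\] $\mathbb{J}_N$ is the set of integer sequences $\lambda_1\ge\dots\ge\lambda_N\ge0$.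 Dimensions: $\dim_{SO(2N+1)}\lambda=\prod_{i<j}\frac{l_i^2-l_j^2}{m_i^2-m_j^2}\prod_i\frac{l_i}{m_i}$ with $l_i=\lambda_i+N-i+\frac12$, $m_i=N-i+\frac12$; $\dim_{SO(2N)}\lambda=\prod_{i<j}\frac{l_i^2-l_j^2}{m_i^2-m_j^2}$ with $l_i=\lambda_i+N-i$, $m_i=N-i$. Characters: for $z_1,\dots,z_N$ on the unit circle, $\zeta_j=(z_j+z_j^{-1})/2$, $\chi^{\lambda}_{SO(2N+1)}(z)=\det[\mathsf{J}^{(1/2,-1/2)}_{\lambda_i-i+N}(\zeta_j)]/\det[(z_j+z_j^{-1})^{N-i}]$ (the irreducible character of $SO(2N+1)$ with highest weight $\lambda$ at an element with eigenvalues $z_j^{\pm1},1$), and $X^{\lambda}_{SO(2N)}(z):=(\chi^{\lambda}_{SO(2N)}+\chi^{\lambda^*}_{SO(2N)})(z)=\det[2\mathsf{J}^{(-1/2,-1/2)}_{\lambda_i-i+N}(\zeta_j)]/\det[(z_j+z_j^{-1})^{N-i}]$, where $\lambda^*=(\lambda_1,\dots,\lambda_{N-1},-\lambda_N)$ (these ratios are Laurent polynomials, extended by continuity). The probability measures $P^\omega_{N,1/2},P^\omega_{N,-1/2}$ on $\mathbb{J}_N$ are defined (via restriction of the extreme character $\chi^\omega$ of $O(\infty)$ to $SO(2N+1)$, resp. $SO(2N)$) by the identities, valid for all $z_j$ on the unit circle, \[\prod_{j=1}^N E^\omega(\zeta_j)=\sum_{\lambda\in\mathbb{J}_N}P^\omega_{N,1/2}(\lambda)\frac{\chi^\lambda_{SO(2N+1)}(z)}{\dim_{SO(2N+1)}\lambda}=\sum_{\lambda\in\mathbb{J}_N}P^\omega_{N,-1/2}(\lambda)\frac{X^\lambda_{SO(2N)}(z)}{2\dim_{SO(2N)}\lambda}.\]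 *)

theory Defs
  imports "HOL-Analysis.Analysis" "Jordan_Normal_Form.Determinant"
begin

(* Parameter space Omega; sequences alpha, beta indexed from 0 (paper: from 1). *)
definition in_Omega :: "(nat \<Rightarrow> real) \<Rightarrow> (nat \<Rightarrow> real) \<Rightarrow> real \<Rightarrow> bool" where
  "in_Omega \<alpha> \<beta> \<delta> \<longleftrightarrow>
     (\<forall>i. \<alpha> (Suc i) \<le> \<alpha> i) \<and> (\<forall>i. 0 \<le> \<alpha> i) \<and>
     (\<forall>i. \<beta> (Suc i) \<le> \<beta> i) \<and> (\<forall>i. 0 \<le> \<beta> i) \<and>
     summable (\<lambda>i. \<alpha> i + \<beta> i) \<and> (\<Sum>i. \<alpha> i + \<beta> i) \<le> \<delta>"

definition gamma_param :: "(nat \<Rightarrow> real) \<Rightarrow> (nat \<Rightarrow> real) \<Rightarrow> real \<Rightarrow> real" where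
  "gamma_param \<alpha> \<beta> \<delta> = \<delta> - (\<Sum>i. \<alpha> i + \<beta> i)"

definition E_omega :: "(nat \<Rightarrow> real) \<Rightarrow> (nat \<Rightarrow> real) \<Rightarrow> real \<Rightarrow> real \<Rightarrow> real" where
  "E_omega \<alpha> \<beta> \<delta> x = exp (gamma_param \<alpha> \<beta> \<delta> * (x - 1)) *
     prodinf (\<lambda>i. (1 - \<beta> i * (1 - x) + (\<beta> i)\<^sup>2 * (1 - x) / 2) /
                   (1 + \<alpha> i * (1 - x) + (\<alpha> i)\<^sup>2 * (1 - x) / 2))"

(* J^{(-1/2,-1/2)}_s(cos t) = cos(s t) *)
definition Jm :: "nat \<Rightarrow> real \<Rightarrow> real" where
  "Jm s x = cos (real s * arccos x)"

(* J^{(1/2,-1/2)}_s(cos t) = sin((s+1/2)t)/sin(t/2) = 1 + 2 * sum_{k=1..s} cos(k t)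
   (expansion of (z^{s+1/2}-z^{-s-1/2})/(z^{1/2}-z^{-1/2}) = sum_{k=-s..s} z^k) *)
definition Jp :: "nat \<Rightarrow> real \<Rightarrow> real" where
  "Jp s x = 1 + 2 * (\<Sum>k=1..s. cos (real k * arccos x))"

definition Jac :: "real \<Rightarrow> nat \<Rightarrow> real \<Rightarrow> real" where
  "Jac a s x = (if a = 1/2 then Jp s x else Jm s x)"

definition Wt :: "real \<Rightarrow> nat \<Rightarrow> real" where
  "Wt a s = (if a = 1/2 then 1 else (if s = 0 then 1 else 2))"

(* J_N : nonincreasing sequences of N nonnegative integers, as lists (index i+1 of paper = list index i) *)
definition JN :: "nat \<Rightarrow> nat list set" where
  "JN N = {lam. length lam = N \<and> sorted_wrt (\<ge>) lam}"

definition dimB :: "nat \<Rightarrow> nat list \<Rightarrow> real" where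
  "dimB N lam =
     (let l = (\<lambda>i. real (lam ! i) + real N - real i - 1/2);
          m = (\<lambda>i. real N - real i - 1/2)
      in (\<Prod>i<N. \<Prod>j\<in>{i<..<N}. ((l i)\<^sup>2 - (l j)\<^sup>2) / ((m i)\<^sup>2 - (m j)\<^sup>2)) *
         (\<Prod>i<N. l i / m i))"

definition dimD :: "nat \<Rightarrow> nat list \<Rightarrow> real" where
  "dimD N lam =
     (let l = (\<lambda>i. real (lam ! i) + real N - real i - 1);
          m = (\<lambda>i. real N - real i - 1)
      in (\<Prod>i<N. \<Prod>j\<in>{i<..<N}. ((l i)\<^sup>2 - (l j)\<^sup>2) / ((m i)\<^sup>2 - (m j)\<^sup>2)))"

(* denominator det[(z_j+z_j^{-1})^{N-i}] with z_j = e^{i theta_j} *)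
definition char_denom :: "nat \<Rightarrow> (nat \<Rightarrow> real) \<Rightarrow> real" where
  "char_denom N \<theta> = Determinant.det (Matrix.mat N N (\<lambda>(i, j). (2 * cos (\<theta> j)) ^ (N - 1 - i)))"

(* chi^lambda_{SO(2N+1)} at eigenvalues e^{+-i theta_j}, 1 *)
definition chiB :: "nat \<Rightarrow> nat list \<Rightarrow> (nat \<Rightarrow> real) \<Rightarrow> real" where
  "chiB N lam \<theta> = Determinant.det (Matrix.mat N N (\<lambda>(i, j). Jp (lam ! i + (N - 1 - i)) (cos (\<theta> j))))
                   / char_denom N \<theta>"

(* X^lambda_{SO(2N)} = chi^lambda + chi^{lambda*} at eigenvalues e^{+-i theta_j} *)
definition XD :: "nat \<Rightarrow> nat list \<Rightarrow> (nat \<Rightarrow> real) \<Rightarrow> real" where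
  "XD N lam \<theta> = Determinant.det (Matrix.mat N N (\<lambda>(i, j). 2 * Jm (lam ! i + (N - 1 - i)) (cos (\<theta> j))))
                 / char_denom N \<theta>"

(* P is the probability measure P^omega_{N,a} on J_N: a probability vector on J_N satisfying
   the defining expansion identity (required at all points where the Vandermonde-type
   denominator does not vanish, i.e. cos theta_j pairwise distinct; elsewhere the
   characters are defined by continuity). *)
definition is_P_omega ::
  "(nat \<Rightarrow> real) \<Rightarrow> (nat \<Rightarrow> real) \<Rightarrow> real \<Rightarrow> nat \<Rightarrow> real \<Rightarrow> (nat list \<Rightarrow> real) \<Rightarrow> bool" where
  "is_P_omega \<alpha> \<beta> \<delta> N a P \<longleftrightarrow>
     (\<forall>lam\<in>JN N. 0 \<le> P lam) \<and> (P has_sum 1) (JN N) \<and>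
     (\<forall>\<theta>::nat \<Rightarrow> real. inj_on (\<lambda>j. cos (\<theta> j)) {..<N} \<longrightarrow>
        (if a = 1/2 then
           ((\<lambda>lam. P lam * chiB N lam \<theta> / dimB N lam) has_sum (\<Prod>j<N. E_omega \<alpha> \<beta> \<delta> (cos (\<theta> j)))) (JN N)
         else
           ((\<lambda>lam. P lam * XD N lam \<theta> / (2 * dimD N lam)) has_sum (\<Prod>j<N. E_omega \<alpha> \<beta> \<delta> (cos (\<theta> j)))) (JN N)))"

definition f_fun :: "(nat \<Rightarrow> real) \<Rightarrow> (nat \<Rightarrow> real) \<Rightarrow> real \<Rightarrow> nat \<Rightarrow> real \<Rightarrow> nat \<Rightarrow> nat \<Rightarrow> real" where
  "f_fun \<alpha> \<beta> \<delta> N a j k = Wt a k / pi *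
     (LINT x:{-1..1}|lborel. x ^ (N - j) * E_omega \<alpha> \<beta> \<delta> x * Jac a k x *
                             (1 - x) powr a * (1 + x) powr (-1/2))"

definition C_const :: "nat \<Rightarrow> real \<Rightarrow> real" where
  "C_const N a = (if a = 1/2 then 2 powr ((real N - 1) * real N / 2)
                  else 2 powr ((real N - 2) * (real N - 1) / 2))"

definition dim_a :: "nat \<Rightarrow> real \<Rightarrow> nat list \<Rightarrow> real" where
  "dim_a N a lam = (if a = 1/2 then dimB N lam else dimD N lam)"

end

theory Submission
  imports Defs
begin

lemma Jp_Suc: "Jp (Suc l) x = Jp l x + 2 * cos (real (Suc l) * arccos x)"
  unfolding Jp_def by simp

lemma Jp_sin_aux:
  fixes t :: real
  shows "(1 + 2 * (\<Sum>k=1..l. cos (real k * t))) * sin (t/2) = sin ((real l + 1/2) * t)"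
proof (induction l)
  case 0 then show ?case by simp
next
  case (Suc l)
  have e: "2 * cos (real (Suc l) * t) * sin (t/2) = sin ((real (Suc l) + 1/2) * t) - sin ((real l + 1/2) * t)"
  proof -
    have "sin ((real (Suc l) + 1/2) * t) = sin (real (Suc l) * t + t/2)" by (simp add: algebra_simps)
    moreover have "sin ((real l + 1/2) * t) = sin (real (Suc l) * t - t/2)" by (simp add: algebra_simps)
    ultimately show ?thesis by (simp add: sin_add sin_diff)
  qed
  have "(1 + 2 * (\<Sum>k=1..Suc l. cos (real k * t))) * sin (t/2)
      = (1 + 2 * (\<Sum>k=1..l. cos (real k * t))) * sin (t/2) + 2 * cos (real (Suc l) * t) * sin (t/2)"
    by (simp add: algebra_simps)
  also have "\<dots> = sin ((real (Suc l) + 1/2) * t)" using Suc e by simp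
  finally show ?case .
qed

lemma Jp_cos: "0 \<le> t \<Longrightarrow> t \<le> pi \<Longrightarrow> Jp l (cos t) = 1 + 2 * (\<Sum>k=1..l. cos (real k * t))"
  unfolding Jp_def by (simp add: arccos_cos)

lemma Jm_cos: "0 \<le> t \<Longrightarrow> t \<le> pi \<Longrightarrow> Jm l (cos t) = cos (real l * t)"
  unfolding Jm_def by (simp add: arccos_cos)

lemma Jp_sin: "0 \<le> t \<Longrightarrow> t \<le> pi \<Longrightarrow> Jp l (cos t) * sin (t/2) = sin ((real l + 1/2) * t)"
  using Jp_sin_aux Jp_cos by simp

lemma one_minus_cos: "1 - cos (t::real) = 2 * (sin (t/2))^2"
proof -
  have "cos t = cos (2 * (t/2))" by simp
  also have "\<dots> = 1 - 2 * (sin (t/2))^2" by (rule cos_double_sin)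
  finally show ?thesis by simp
qed

lemma Jp_prod: "0 \<le> t \<Longrightarrow> t \<le> pi \<Longrightarrow>
   Jp l (cos t) * Jp k (cos t) * (1 - cos t) = cos ((real_of_int (int l - int k)) * t) - cos (real_of_int (int l + int k + 1) * t)"
proof -
  assume t: "0 \<le> t" "t \<le> pi"
  have "Jp l (cos t) * Jp k (cos t) * (1 - cos t) = 2 * (Jp l (cos t) * sin (t/2)) * (Jp k (cos t) * sin (t/2))"
    by (simp add: one_minus_cos power2_eq_square)
  also have "\<dots> = 2 * sin ((real l + 1/2) * t) * sin ((real k + 1/2) * t)" using Jp_sin t by simp
  also have "\<dots> = cos ((real l + 1/2) * t - (real k + 1/2) * t) - cos ((real l + 1/2) * t + (real k + 1/2) * t)"
    by (simp add: cos_add cos_diff)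
  also have "\<dots> = cos ((real_of_int (int l - int k)) * t) - cos (real_of_int (int l + int k + 1) * t)"
    by (simp add: algebra_simps)
  finally show ?thesis .
qed

lemma Jm_prod: "0 \<le> t \<Longrightarrow> t \<le> pi \<Longrightarrow>
   Jm l (cos t) * Jm k (cos t) = (cos ((real_of_int (int l - int k)) * t) + cos (real_of_int (int l + int k) * t)) / 2"
proof -
  assume t: "0 \<le> t" "t \<le> pi"
  have "Jm l (cos t) * Jm k (cos t) = cos (real l * t) * cos (real k * t)" using Jm_cos t by simp
  also have "\<dots> = (cos (real l * t - real k * t) + cos (real l * t + real k * t)) / 2"
    by (simp add: cos_add cos_diff)
  also have "\<dots> = (cos ((real_of_int (int l - int k)) * t) + cos (real_of_int (int l + int k) * t)) / 2"
    by (simp add: algebra_simps)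
  finally show ?thesis .
qed

lemma int_cos:
  fixes m :: int
  shows "integral\<^sup>L lborel (\<lambda>t. indicator {0..pi} t * cos (real_of_int m * t)) = (if m = 0 then pi else 0)"
proof (cases "m = 0")
  case True
  have "integral\<^sup>L lborel (\<lambda>t. indicator {0..pi} t *\<^sub>R (1::real)) = pi - 0"
    by (rule integral_FTC_atLeastAtMost[where F="\<lambda>t. t"]) (auto intro!: derivative_eq_intros)
  then show ?thesis using True by simp
next
  case False
  have "integral\<^sup>L lborel (\<lambda>t. indicator {0..pi} t *\<^sub>R cos (real_of_int m * t))
     = sin (real_of_int m * pi) / real_of_int m - sin (real_of_int m * 0) / real_of_int m"
  proof (rule integral_FTC_atLeastAtMost[where F="\<lambda>t. sin (real_of_int m * t) / real_of_int m"])
    fix x :: real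
    have "((\<lambda>t. sin (real_of_int m * t) / real_of_int m) has_real_derivative cos (real_of_int m * x)) (at x within {0..pi})"
      by (auto intro!: derivative_eq_intros simp: False)
    then show "((\<lambda>t. sin (real_of_int m * t) / real_of_int m) has_vector_derivative cos (real_of_int m * x)) (at x within {0..pi})"
      by (simp add: has_real_derivative_iff_has_vector_derivative)
  qed (auto intro!: continuous_intros)
  then show ?thesis using False using sin_zero_iff_int2[of "real_of_int m * pi"] by auto
qed

lemma int_cos_integrable: "integrable lborel (\<lambda>t. indicator {0..pi} t * cos (c * t))"
proof -
  have "set_integrable lborel {0..pi} (\<lambda>t. cos (c * t))"
    by (intro borel_integrable_atLeastAtMost' continuous_intros)
  then show ?thesis by (simp add: set_integrable_def)
qed

definition phi :: "real \<Rightarrow> nat \<Rightarrow> real \<Rightarrow> real" where "phi a k t = Jac a k (cos t)"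
definition wt :: "real \<Rightarrow> real \<Rightarrow> real" where "wt a t = (if a = 1/2 then 1 - cos t else 1)"
definition nu :: "real \<Rightarrow> nat \<Rightarrow> real" where "nu a k = pi / Wt a k"

lemma Wt_pos: "Wt a k > 0" unfolding Wt_def by auto
lemma nu_pos: "nu a k > 0" unfolding nu_def using Wt_pos by (simp add: pi_gt_zero)

lemma cont_phi: "continuous_on UNIV (phi a k)"
proof -
  have c: "\<And>j::nat. continuous_on UNIV (\<lambda>t. cos (real j * arccos (cos t)))"
    by (intro continuous_intros) auto
  show ?thesis unfolding phi_def Jac_def Jp_def Jm_def
    by (cases "a = 1/2") (auto intro!: continuous_intros c)
qed

lemma meas_phi[measurable]: "phi a k \<in> borel_measurable borel"
  by (rule borel_measurable_continuous_onI[OF cont_phi])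

lemma cont_wt: "continuous_on UNIV (wt a)"
  unfolding wt_def by (cases "a = 1/2") (auto intro!: continuous_intros)

lemma meas_wt[measurable]: "wt a \<in> borel_measurable borel"
  by (rule borel_measurable_continuous_onI[OF cont_wt])

lemma bound_phi: "\<bar>phi a k t\<bar> \<le> 2 * real k + 1"
proof (cases "a = 1/2")
  case True
  have "\<bar>\<Sum>j=1..k. cos (real j * arccos (cos t))\<bar> \<le> (\<Sum>j=1..k. (1::real))"
    by (rule order_trans[OF sum_abs]) (intro sum_mono, simp)
  then have "\<bar>\<Sum>j=1..k. cos (real j * arccos (cos t))\<bar> \<le> real k" by simp
  moreover have "phi a k t = 1 + 2 * (\<Sum>j=1..k. cos (real j * arccos (cos t)))"
    using True by (simp add: phi_def Jac_def Jp_def)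
  ultimately show ?thesis by linarith
next
  case False
  then show ?thesis unfolding phi_def Jac_def Jm_def by (simp add: order_trans[OF abs_cos_le_one])
qed

lemma bound_phi_wt: "\<bar>phi a l t * wt a t\<bar> \<le> 2"
proof (cases "a = 1/2")
  case True
  define s where "s = arccos (cos t)"
  have s: "0 \<le> s" "s \<le> pi" unfolding s_def by (auto simp: arccos_lbound arccos_ubound)
  have cs: "cos t = cos s" unfolding s_def by simp
  have "phi a l t * wt a t = Jp l (cos s) * (1 - cos s)" using True unfolding phi_def Jac_def wt_def cs by simp
  also have "\<dots> = 2 * (Jp l (cos s) * sin (s/2)) * sin (s/2)" by (simp add: one_minus_cos power2_eq_square)
  also have "\<dots> = 2 * sin ((real l + 1/2) * s) * sin (s/2)" using Jp_sin[OF s] by simp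
  finally have e: "phi a l t * wt a t = 2 * sin ((real l + 1/2) * s) * sin (s/2)" .
  have "\<bar>sin ((real l + 1/2) * s) * sin (s/2)\<bar> \<le> 1"
    by (simp add: abs_mult mult_le_one)
  then show ?thesis unfolding e by (simp add: abs_mult)
next
  case False
  then show ?thesis unfolding phi_def Jac_def Jm_def wt_def by (auto intro: order_trans[OF abs_cos_le_one])
qed

lemma int_bdd:
  fixes f :: "real \<Rightarrow> real"
  assumes "f \<in> borel_measurable borel" "\<And>t. t \<in> {0..pi} \<Longrightarrow> \<bar>f t\<bar> \<le> B"
  shows "integrable lborel (\<lambda>t. indicator {0..pi} t * f t)"
  using integrableI_bounded_set_indicator[of "{0..pi}" lborel f B] assms by simp

lemma orth:
  assumes a: "a = 1/2 \<or> a = -1/2"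
  shows "integral\<^sup>L lborel (\<lambda>t. indicator {0..pi} t * (phi a l t * phi a k t * wt a t)) = (if l = k then nu a k else 0)"
proof (cases "a = 1/2")
  case True
  have "integral\<^sup>L lborel (\<lambda>t. indicator {0..pi} t * (phi a l t * phi a k t * wt a t))
     = integral\<^sup>L lborel (\<lambda>t. indicator {0..pi} t * cos ((real_of_int (int l - int k)) * t) - indicator {0..pi} t * cos (real_of_int (int l + int k + 1) * t))"
  proof (intro Bochner_Integration.integral_cong refl)
    fix t
    show "indicator {0..pi} t * (phi a l t * phi a k t * wt a t) = indicator {0..pi} t * cos ((real_of_int (int l - int k)) * t) - indicator {0..pi} t * cos (real_of_int (int l + int k + 1) * t)"
    proof (cases "t \<in> {0..pi}")
      case True
      then show ?thesis using Jp_prod[of t l k] \<open>a = 1/2\<close> by (simp add: phi_def Jac_def wt_def)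
    qed simp
  qed
  also have "\<dots> = integral\<^sup>L lborel (\<lambda>t. indicator {0..pi} t * cos ((real_of_int (int l - int k)) * t)) - integral\<^sup>L lborel (\<lambda>t. indicator {0..pi} t * cos (real_of_int (int l + int k + 1) * t))"
    by (rule Bochner_Integration.integral_diff) (rule int_cos_integrable)+
  also have "\<dots> = (if l = k then pi else 0) - 0"
    by (simp only: int_cos) simp
  finally show ?thesis by (simp add: nu_def Wt_def True)
next
  case False
  then have a': "a = -1/2" using a by auto
  have "integral\<^sup>L lborel (\<lambda>t. indicator {0..pi} t * (phi a l t * phi a k t * wt a t))
     = integral\<^sup>L lborel (\<lambda>t. (indicator {0..pi} t * cos ((real_of_int (int l - int k)) * t) + indicator {0..pi} t * cos (real_of_int (int l + int k) * t)) / 2)"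
  proof (intro Bochner_Integration.integral_cong refl)
    fix t
    show "indicator {0..pi} t * (phi a l t * phi a k t * wt a t) = (indicator {0..pi} t * cos ((real_of_int (int l - int k)) * t) + indicator {0..pi} t * cos (real_of_int (int l + int k) * t)) / 2"
    proof (cases "t \<in> {0..pi}")
      case True
      then show ?thesis using Jm_prod[of t l k] a' by (simp add: phi_def Jac_def wt_def algebra_simps)
    qed simp
  qed
  also have "\<dots> = (integral\<^sup>L lborel (\<lambda>t. indicator {0..pi} t * cos ((real_of_int (int l - int k)) * t)) + integral\<^sup>L lborel (\<lambda>t. indicator {0..pi} t * cos (real_of_int (int l + int k) * t))) / 2"
    by (subst integral_divide_zero, subst Bochner_Integration.integral_add) (rule int_cos_integrable | simp)+
  also have "\<dots> = ((if l = k then pi else 0) + (if l + k = 0 then pi else 0)) / 2"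
    by (simp only: int_cos) simp
  finally show ?thesis using a' by (auto simp: nu_def Wt_def)
qed

definition fac :: "(nat \<Rightarrow> real) \<Rightarrow> (nat \<Rightarrow> real) \<Rightarrow> nat \<Rightarrow> real \<Rightarrow> real" where
  "fac \<alpha> \<beta> i x = (1 - \<beta> i * (1 - x) + (\<beta> i)\<^sup>2 * (1 - x) / 2) /
                   (1 + \<alpha> i * (1 - x) + (\<alpha> i)\<^sup>2 * (1 - x) / 2)"

definition sbd :: "(nat \<Rightarrow> real) \<Rightarrow> (nat \<Rightarrow> real) \<Rightarrow> nat \<Rightarrow> real" where
  "sbd \<alpha> \<beta> i = 2 * \<alpha> i + (\<alpha> i)\<^sup>2 + 2 * \<beta> i + (\<beta> i)\<^sup>2"

lemma E_omega_fac: "E_omega \<alpha> \<beta> \<delta> x = exp (gamma_param \<alpha> \<beta> \<delta> * (x - 1)) * prodinf (\<lambda>i. fac \<alpha> \<beta> i x)"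
  unfolding E_omega_def fac_def ..

lemma sq_summable:
  fixes u :: "nat \<Rightarrow> real"
  assumes "\<And>i. 0 \<le> u i" "\<And>i. u (Suc i) \<le> u i" "summable u"
  shows "summable (\<lambda>i. (u i)\<^sup>2)"
proof -
  have dec: "\<And>i. u i \<le> u 0"
  proof -
    fix i show "u i \<le> u 0" by (induction i) (use assms(2) order_trans in blast)+
  qed
  show ?thesis
  proof (rule summable_comparison_test[where g="\<lambda>i. u 0 * u i"])
    show "\<exists>N. \<forall>n\<ge>N. norm ((u n)\<^sup>2) \<le> u 0 * u n"
      using assms(1) dec by (auto simp: power2_eq_square intro!: mult_right_mono)
    show "summable (\<lambda>i. u 0 * u i)" using assms(3) by (rule summable_mult)
  qed
qed

lemma Omega_facts:
  assumes "in_Omega \<alpha> \<beta> \<delta>"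
  shows "summable \<alpha>" "summable \<beta>" "summable (sbd \<alpha> \<beta>)" "\<And>i. 0 \<le> \<alpha> i" "\<And>i. 0 \<le> \<beta> i"
    "gamma_param \<alpha> \<beta> \<delta> \<ge> 0"
proof -
  have A: "\<forall>i. \<alpha> (Suc i) \<le> \<alpha> i" "\<forall>i. 0 \<le> \<alpha> i" "\<forall>i. \<beta> (Suc i) \<le> \<beta> i" "\<forall>i. 0 \<le> \<beta> i"
    "summable (\<lambda>i. \<alpha> i + \<beta> i)" "(\<Sum>i. \<alpha> i + \<beta> i) \<le> \<delta>"
    using assms unfolding in_Omega_def by auto
  show sa: "summable \<alpha>"
    by (rule summable_comparison_test[OF _ A(5)]) (use A in auto)
  show sb: "summable \<beta>"
    by (rule summable_comparison_test[OF _ A(5)]) (use A in auto)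
  have "summable (\<lambda>i. (\<alpha> i)\<^sup>2)" by (rule sq_summable) (use A sa in auto)
  moreover have "summable (\<lambda>i. (\<beta> i)\<^sup>2)" by (rule sq_summable) (use A sb in auto)
  ultimately show "summable (sbd \<alpha> \<beta>)" unfolding sbd_def
    by (intro summable_add summable_mult sa sb)
  show "\<And>i. 0 \<le> \<alpha> i" "\<And>i. 0 \<le> \<beta> i" using A by auto
  show "gamma_param \<alpha> \<beta> \<delta> \<ge> 0" using A unfolding gamma_param_def by simp
qed

lemma fac_bound:
  assumes "\<And>i. 0 \<le> \<alpha> i" "\<And>i. 0 \<le> \<beta> i" "-1 \<le> x" "x \<le> 1"
  shows "\<bar>fac \<alpha> \<beta> i x - 1\<bar> \<le> sbd \<alpha> \<beta> i"
proof -
  define t where "t = 1 - x"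
  have t: "0 \<le> t" "t \<le> 2" using assms unfolding t_def by auto
  define a b where "a = \<alpha> i" and "b = \<beta> i"
  have ab: "0 \<le> a" "0 \<le> b" using assms unfolding a_def b_def by auto
  define D where "D = 1 + a * t + a\<^sup>2 * t / 2"
  have D: "D \<ge> 1" unfolding D_def using ab t by simp
  have "fac \<alpha> \<beta> i x - 1 = ((1 - b * t + b\<^sup>2 * t / 2) - D) / D"
    using D unfolding fac_def t_def[symmetric] a_def[symmetric] b_def[symmetric] D_def by (simp add: field_simps)
  also have "(1 - b * t + b\<^sup>2 * t / 2) - D = - b * t + b\<^sup>2 * t / 2 - a * t - a\<^sup>2 * t / 2"
    unfolding D_def by simp
  finally have e: "fac \<alpha> \<beta> i x - 1 = (- b * t + b\<^sup>2 * t / 2 - a * t - a\<^sup>2 * t / 2) / D" .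
  have "\<bar>- b * t + b\<^sup>2 * t / 2 - a * t - a\<^sup>2 * t / 2\<bar> \<le> b * t + b\<^sup>2 * t / 2 + a * t + a\<^sup>2 * t / 2"
    using ab t by (simp add: abs_le_iff)
  also have "\<dots> \<le> 2 * a + a\<^sup>2 + 2 * b + b\<^sup>2"
  proof -
    have "b * t \<le> b * 2" "a * t \<le> a * 2" using ab t by (auto intro: mult_left_mono)
    moreover have "b\<^sup>2 * t \<le> b\<^sup>2 * 2" "a\<^sup>2 * t \<le> a\<^sup>2 * 2" using ab t by (auto intro: mult_left_mono)
    ultimately show ?thesis by linarith
  qed
  finally have n: "\<bar>- b * t + b\<^sup>2 * t / 2 - a * t - a\<^sup>2 * t / 2\<bar> \<le> sbd \<alpha> \<beta> i"
    unfolding sbd_def a_def b_def .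
  have "\<bar>fac \<alpha> \<beta> i x - 1\<bar> \<le> \<bar>- b * t + b\<^sup>2 * t / 2 - a * t - a\<^sup>2 * t / 2\<bar>"
    unfolding e using D by (simp add: divide_le_eq abs_divide order_trans[OF _ mult_left_mono[of 1 D]])
  with n show ?thesis by linarith
qed

lemma fac_conv:
  assumes "in_Omega \<alpha> \<beta> \<delta>" "-1 \<le> x" "x \<le> 1"
  shows "convergent_prod (\<lambda>i. fac \<alpha> \<beta> i x)"
proof -
  note O = Omega_facts[OF assms(1)]
  have "summable (\<lambda>i. norm (fac \<alpha> \<beta> i x - 1))"
    by (rule summable_comparison_test[OF _ O(3)]) (use fac_bound[OF O(4,5) assms(2,3)] in auto)
  then show ?thesis
    by (intro abs_convergent_prod_imp_convergent_prod) (simp add: abs_convergent_prod_conv_summable)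
qed

lemma E_lim:
  assumes "in_Omega \<alpha> \<beta> \<delta>" "-1 \<le> x" "x \<le> 1"
  shows "(\<lambda>n. exp (gamma_param \<alpha> \<beta> \<delta> * (x - 1)) * (\<Prod>i\<le>n. fac \<alpha> \<beta> i x)) \<longlonglongrightarrow> E_omega \<alpha> \<beta> \<delta> x"
  unfolding E_omega_fac by (intro tendsto_mult tendsto_const convergent_prod_LIMSEQ fac_conv[OF assms])

definition Ebd :: "(nat \<Rightarrow> real) \<Rightarrow> (nat \<Rightarrow> real) \<Rightarrow> real" where
  "Ebd \<alpha> \<beta> = exp (suminf (sbd \<alpha> \<beta>))"

lemma E_bound:
  assumes "in_Omega \<alpha> \<beta> \<delta>" "-1 \<le> x" "x \<le> 1"
  shows "\<bar>E_omega \<alpha> \<beta> \<delta> x\<bar> \<le> Ebd \<alpha> \<beta>"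
proof -
  note O = Omega_facts[OF assms(1)]
  have sbd0: "\<And>i. 0 \<le> sbd \<alpha> \<beta> i" unfolding sbd_def using O(4,5) by simp
  have pb: "\<bar>\<Prod>i\<le>n. fac \<alpha> \<beta> i x\<bar> \<le> Ebd \<alpha> \<beta>" for n
  proof -
    have "\<bar>\<Prod>i\<le>n. fac \<alpha> \<beta> i x\<bar> = (\<Prod>i\<le>n. \<bar>fac \<alpha> \<beta> i x\<bar>)" using prod_norm[of "\<lambda>i. fac \<alpha> \<beta> i x" "{..n}"] by simp
    also have "\<dots> \<le> (\<Prod>i\<le>n. exp (sbd \<alpha> \<beta> i))"
    proof (rule prod_mono)
      fix i
      have "\<bar>fac \<alpha> \<beta> i x\<bar> \<le> 1 + sbd \<alpha> \<beta> i" using fac_bound[of \<alpha> \<beta> x i] O(4,5) assms(2,3) by fastforce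
      also have "\<dots> \<le> exp (sbd \<alpha> \<beta> i)" by simp
      finally show "0 \<le> \<bar>fac \<alpha> \<beta> i x\<bar> \<and> \<bar>fac \<alpha> \<beta> i x\<bar> \<le> exp (sbd \<alpha> \<beta> i)" by simp
    qed
    also have "\<dots> = exp (\<Sum>i\<le>n. sbd \<alpha> \<beta> i)" by (simp add: exp_sum)
    also have "\<dots> \<le> Ebd \<alpha> \<beta>" unfolding Ebd_def
      by (simp add: sum_le_suminf O(3) sbd0)
    finally show ?thesis .
  qed
  have "(\<lambda>n. \<bar>\<Prod>i\<le>n. fac \<alpha> \<beta> i x\<bar>) \<longlonglongrightarrow> \<bar>prodinf (\<lambda>i. fac \<alpha> \<beta> i x)\<bar>"
    by (intro tendsto_rabs convergent_prod_LIMSEQ fac_conv[OF assms])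
  then have pi: "\<bar>prodinf (\<lambda>i. fac \<alpha> \<beta> i x)\<bar> \<le> Ebd \<alpha> \<beta>"
    by (rule LIMSEQ_le_const2) (use pb in auto)
  have "exp (gamma_param \<alpha> \<beta> \<delta> * (x - 1)) \<le> 1"
    using O(6) assms(3) by (simp add: mult_nonneg_nonpos)
  then have "\<bar>E_omega \<alpha> \<beta> \<delta> x\<bar> \<le> 1 * Ebd \<alpha> \<beta>"
    unfolding E_omega_fac abs_mult using pi by (intro mult_mono) auto
  then show ?thesis by simp
qed

lemma fac_meas[measurable]: "fac \<alpha> \<beta> i \<in> borel_measurable borel"
  unfolding fac_def by measurable

lemma E_cos_meas:
  assumes "in_Omega \<alpha> \<beta> \<delta>"
  shows "(\<lambda>t. E_omega \<alpha> \<beta> \<delta> (cos t)) \<in> borel_measurable borel"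
proof (rule borel_measurable_LIMSEQ_real)
  fix t :: real
  show "(\<lambda>n. exp (gamma_param \<alpha> \<beta> \<delta> * (cos t - 1)) * (\<Prod>i\<le>n. fac \<alpha> \<beta> i (cos t))) \<longlonglongrightarrow> E_omega \<alpha> \<beta> \<delta> (cos t)"
    by (rule E_lim[OF assms]) auto
qed measurable

lemma E_ind_meas:
  assumes "in_Omega \<alpha> \<beta> \<delta>"
  shows "(\<lambda>x. indicator {-1..1} x * E_omega \<alpha> \<beta> \<delta> x) \<in> borel_measurable borel"
proof (rule borel_measurable_LIMSEQ_real)
  fix x :: real
  show "(\<lambda>n. indicator {-1..1} x * (exp (gamma_param \<alpha> \<beta> \<delta> * (x - 1)) * (\<Prod>i\<le>n. fac \<alpha> \<beta> i x))) \<longlonglongrightarrow> indicator {-1..1} x * E_omega \<alpha> \<beta> \<delta> x"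
    by (cases "x \<in> {-1..1}") (auto intro!: E_lim[OF assms])
qed measurable

lemma weight_id:
  assumes t: "0 < t" "t < pi" and a: "a = 1/2 \<or> a = -1/2"
  shows "(1 - cos t) powr a * (1 + cos t) powr (-1/2) * sin t = wt a t"
proof -
  have c1: "cos t < 1" using cos_monotone_0_pi[of 0 t] t by simp
  have c2: "-1 < cos t" using cos_monotone_0_pi[of t pi] t by simp
  have s: "sin t = sqrt (1 - cos t) * sqrt (1 + cos t)"
  proof -
    have "sin t = sqrt (1 - (cos t)^2)" using sin_cos_sqrt[of t] sin_ge_zero[of t] t by simp
    also have "1 - (cos t)^2 = (1 - cos t) * (1 + cos t)" by (simp add: algebra_simps power2_eq_square)
    finally show ?thesis by (simp add: real_sqrt_mult)
  qed
  have p1: "(1 + cos t) powr (-1/2) = inverse (sqrt (1 + cos t))"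
    using c2 by (simp add: powr_minus powr_half_sqrt[symmetric])
  have q1: "sqrt (1 + cos t) > 0" "sqrt (1 - cos t) > 0" using c1 c2 by auto
  show ?thesis
  proof (cases "a = 1/2")
    case True
    have e1: "(1 - cos t) powr a = sqrt (1 - cos t)" using c1 by (simp add: True powr_half_sqrt)
    have e2: "sqrt (1 - cos t) * sqrt (1 - cos t) = 1 - cos t" using c1 by (simp add: real_sqrt_mult_self)
    have e3: "inverse (sqrt (1 + cos t)) * sqrt (1 + cos t) = 1" using q1 by simp
    have "(1 - cos t) powr a * (1 + cos t) powr (-1/2) * sin t
        = (sqrt (1 - cos t) * sqrt (1 - cos t)) * (inverse (sqrt (1 + cos t)) * sqrt (1 + cos t))"
      unfolding e1 p1 s by (simp only: mult_ac)
    also have "\<dots> = 1 - cos t" unfolding e2 e3 by simp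
    finally show ?thesis by (simp add: wt_def True)
  next
    case False
    then have "a = -1/2" using a by auto
    then have "(1 - cos t) powr a = inverse (sqrt (1 - cos t))" using c1 by (simp add: powr_minus powr_half_sqrt[symmetric])
    then show ?thesis using False q1 unfolding p1 s wt_def by (simp add: field_simps)
  qed
qed

definition Fint :: "(nat \<Rightarrow> real) \<Rightarrow> (nat \<Rightarrow> real) \<Rightarrow> real \<Rightarrow> nat \<Rightarrow> real \<Rightarrow> nat \<Rightarrow> real \<Rightarrow> real" where
  "Fint \<alpha> \<beta> \<delta> n a k x = x ^ n * E_omega \<alpha> \<beta> \<delta> x * Jac a k x * (1 - x) powr a * (1 + x) powr (-1/2)"

lemma cont_Jac: "continuous_on {-1..1} (Jac a k)"
proof -
  have c: "\<And>j::nat. continuous_on {-1..1} (\<lambda>x. cos (real j * arccos x))"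
    by (intro continuous_intros) auto
  show ?thesis unfolding Jac_def Jp_def Jm_def
    by (cases "a = 1/2") (auto intro!: continuous_intros c)
qed

lemma meas_Fint:
  assumes "in_Omega \<alpha> \<beta> \<delta>"
  shows "(\<lambda>x. indicator {-1..1} x * Fint \<alpha> \<beta> \<delta> n a k x) \<in> borel_measurable borel"
proof -
  have m1: "(\<lambda>x. indicator {-1..1} x * E_omega \<alpha> \<beta> \<delta> x) \<in> borel_measurable borel" by (rule E_ind_meas[OF assms])
  have m2: "(\<lambda>x. indicator {-1..1} x *\<^sub>R Jac a k x) \<in> borel_measurable borel"
    by (rule borel_measurable_continuous_on_indicator[OF _ cont_Jac]) simp
  have "(\<lambda>x. (indicator {-1..1} x * E_omega \<alpha> \<beta> \<delta> x) * (indicator {-1..1} x *\<^sub>R Jac a k x) * x ^ n * (1 - x) powr a * (1 + x) powr (-1/2)) \<in> borel_measurable borel"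
    using m1 m2 by measurable
  also have "(\<lambda>x. (indicator {-1..1} x * E_omega \<alpha> \<beta> \<delta> x) * (indicator {-1..1} x *\<^sub>R Jac a k x) * x ^ n * (1 - x) powr a * (1 + x) powr (-1/2))
     = (\<lambda>x. indicator {-1..1} x * Fint \<alpha> \<beta> \<delta> n a k x)"
    by (auto simp: Fint_def indicator_def fun_eq_iff)
  finally show ?thesis .
qed

lemma Fint_cos_sin:
  assumes t: "0 < t" "t < pi" and a: "a = 1/2 \<or> a = -1/2"
  shows "Fint \<alpha> \<beta> \<delta> n a k (cos t) * sin t = cos t ^ n * E_omega \<alpha> \<beta> \<delta> (cos t) * phi a k t * wt a t"
  using weight_id[OF t a] unfolding Fint_def phi_def by (simp add: algebra_simps)

lemma cosn_bound: "\<bar>cos (t::real) ^ n\<bar> \<le> 1"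
proof -
  have "\<bar>cos t\<bar> ^ n \<le> 1" by (metis abs_ge_zero abs_cos_le_one power_le_one)
  then show ?thesis by (simp add: power_abs)
qed

lemma Fcs_bound:
  assumes O: "in_Omega \<alpha> \<beta> \<delta>" and a: "a = 1/2 \<or> a = -1/2" and t: "0 \<le> t" "t \<le> pi"
  shows "\<bar>Fint \<alpha> \<beta> \<delta> n a k (cos t) * sin t\<bar> \<le> 2 * Ebd \<alpha> \<beta>"
proof (cases "t = 0 \<or> t = pi")
  case True
  have "Ebd \<alpha> \<beta> \<ge> 0" unfolding Ebd_def by simp
  then show ?thesis using True by auto
next
  case False
  then have t': "0 < t" "t < pi" using t by auto
  define pw where "pw = phi a k t * wt a t"
  have h3: "\<bar>pw\<bar> \<le> 2" unfolding pw_def by (rule bound_phi_wt)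
  have h2: "\<bar>E_omega \<alpha> \<beta> \<delta> (cos t)\<bar> \<le> Ebd \<alpha> \<beta>" by (rule E_bound[OF O]) auto
  have "\<bar>cos t ^ n\<bar> * \<bar>E_omega \<alpha> \<beta> \<delta> (cos t)\<bar> * \<bar>pw\<bar> \<le> 1 * Ebd \<alpha> \<beta> * 2"
    by (intro mult_mono cosn_bound h2 h3) (auto simp: Ebd_def)
  then have "\<bar>cos t ^ n * E_omega \<alpha> \<beta> \<delta> (cos t) * (phi a k t * wt a t)\<bar> \<le> 1 * Ebd \<alpha> \<beta> * 2"
    unfolding pw_def[symmetric] by (simp add: abs_mult)
  then show ?thesis unfolding Fint_cos_sin[OF t' a] by (simp add: mult_ac)
qed

lemma fsub:
  assumes O: "in_Omega \<alpha> \<beta> \<delta>" and a: "a = 1/2 \<or> a = -1/2"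
  shows "(LINT x:{-1..1}|lborel. Fint \<alpha> \<beta> \<delta> n a k x)
       = integral\<^sup>L lborel (\<lambda>t. indicator {0..pi} t * (cos t ^ n * E_omega \<alpha> \<beta> \<delta> (cos t) * phi a k t * wt a t))"
proof -
  define F where "F = Fint \<alpha> \<beta> \<delta> n a k"
  define G where "G y = F (- y)" for y
  have ind: "indicator {-1..1} (- y) = (indicator {-1..1} y :: real)" for y :: real
    by (auto simp: indicator_def)
  have MF: "(\<lambda>x. indicator {-1..1} x * F x) \<in> borel_measurable borel"
    unfolding F_def by (rule meas_Fint[OF O])
  have MG: "(\<lambda>y. indicator {-1..1} y * G y) \<in> borel_measurable borel"
  proof -
    have "(\<lambda>y. (\<lambda>x. indicator {-1..1} x * F x) (- y)) \<in> borel_measurable borel"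
      by (rule measurable_compose[OF _ MF]) measurable
    then show ?thesis unfolding G_def ind .
  qed
  have deriv: "\<And>x. x \<in> {0..pi} \<Longrightarrow> ((\<lambda>t. - cos t) has_real_derivative sin x) (at x)"
    by (auto intro!: derivative_eq_intros)
  have contd: "continuous_on {0..pi} sin" by (intro continuous_intros)
  have dnn: "\<And>x. x \<in> {0..pi} \<Longrightarrow> 0 \<le> sin x" by (auto intro: sin_ge_zero)
  have GF: "G (- cos t) = F (cos t)" for t unfolding G_def by simp
  have bnd: "\<And>t. t \<in> {0..pi} \<Longrightarrow> \<bar>G (- cos t) * sin t\<bar> \<le> 2 * Ebd \<alpha> \<beta>"
    unfolding GF F_def using Fcs_bound[OF O a] by auto
  have Gint: "set_integrable lborel {-1..1} G"
  proof -
    have Mabs: "set_borel_measurable borel {-1..1} (\<lambda>y. \<bar>G y\<bar>)"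
    proof -
      have "(\<lambda>y. \<bar>indicator {-1..1} y * G y\<bar>) \<in> borel_measurable borel" using MG by measurable
      then show ?thesis unfolding set_borel_measurable_def by (simp add: abs_mult)
    qed
    have "(\<integral>\<^sup>+y. ennreal (\<bar>G y\<bar> * indicator {-1..1} y) \<partial>lborel)
        = (\<integral>\<^sup>+t. ennreal (\<bar>G (- cos t)\<bar> * sin t * indicator {0..pi} t) \<partial>lborel)"
      using nn_integral_substitution[OF _ deriv contd dnn, where f="\<lambda>y. \<bar>G y\<bar>"] Mabs by simp
    also have "\<dots> \<le> (\<integral>\<^sup>+t. ennreal (2 * Ebd \<alpha> \<beta>) * indicator {0..pi} t \<partial>lborel)"
    proof (intro nn_integral_mono)
      fix t
      show "ennreal (\<bar>G (- cos t)\<bar> * sin t * indicator {0..pi} t) \<le> ennreal (2 * Ebd \<alpha> \<beta>) * indicator {0..pi} t"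
      proof (cases "t \<in> {0..pi}")
        case True
        have "\<bar>G (- cos t)\<bar> * sin t = \<bar>G (- cos t) * sin t\<bar>" using dnn[OF True] by (simp add: abs_mult)
        then show ?thesis using True bnd[OF True] by (simp add: ennreal_leI)
      qed simp
    qed
    also have "\<dots> < \<infinity>" by (simp add: nn_integral_cmult_indicator ennreal_mult_less_top)
    finally have fin: "(\<integral>\<^sup>+y. ennreal (\<bar>G y\<bar> * indicator {-1..1} y) \<partial>lborel) < \<infinity>" .
    have "(\<lambda>y. indicator {-1..1} y *\<^sub>R G y) \<in> borel_measurable borel" using MG by simp
    moreover have "(\<integral>\<^sup>+y. ennreal (norm (indicator {-1..1} y *\<^sub>R G y)) \<partial>lborel) < \<infinity>"
    proof -
      have "(\<integral>\<^sup>+y. ennreal (norm (indicator {-1..1} y *\<^sub>R G y)) \<partial>lborel) = (\<integral>\<^sup>+y. ennreal (\<bar>G y\<bar> * indicator {-1..1} y) \<partial>lborel)"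
        by (intro nn_integral_cong) (auto simp: indicator_def)
      then show ?thesis using fin by simp
    qed
    ultimately show ?thesis unfolding set_integrable_def by (simp add: integrable_iff_bounded)
  qed
  have sub: "(LBINT x. G x * indicator {-1..1} x) = (LBINT t. G (- cos t) * sin t * indicator {0..pi} t)"
    using integral_substitution(2)[OF _ deriv contd dnn, where f=G] Gint by simp
  have lhs: "(LINT x:{-1..1}|lborel. F x) = (LBINT x. G x * indicator {-1..1} x)"
  proof -
    have "(LINT x:{-1..1}|lborel. F x) = (LBINT x. indicator {-1..1} x * F x)"
      by (simp add: set_lebesgue_integral_def)
    also have "\<dots> = \<bar>-1::real\<bar> *\<^sub>R (LBINT x. indicator {-1..1} (0 + -1 * x) * F (0 + -1 * x))"
      by (rule lborel_integral_real_affine) simp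
    also have "\<dots> = (LBINT x. G x * indicator {-1..1} x)"
      by (simp add: G_def ind mult.commute)
    finally show ?thesis .
  qed
  have rhs: "(LBINT t. G (- cos t) * sin t * indicator {0..pi} t)
      = integral\<^sup>L lborel (\<lambda>t. indicator {0..pi} t * (cos t ^ n * E_omega \<alpha> \<beta> \<delta> (cos t) * phi a k t * wt a t))"
  proof (rule integral_cong_AE)
    have "(\<lambda>t. (\<lambda>x. indicator {-1..1} x * F x) (cos t) * sin t * indicator {0..pi} t) \<in> borel_measurable borel"
    proof -
      have M1: "(\<lambda>t. (\<lambda>x. indicator {-1..1} x * F x) (cos t)) \<in> borel_measurable borel"
        by (rule measurable_compose[OF _ MF]) measurable
      show ?thesis using M1 by measurable
    qed
    moreover have "(\<lambda>t. (\<lambda>x. indicator {-1..1} x * F x) (cos t) * sin t * indicator {0..pi} t) = (\<lambda>t. G (- cos t) * sin t * indicator {0..pi} t)"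
      by (auto simp: GF fun_eq_iff indicator_def)
    ultimately show "(\<lambda>t. G (- cos t) * sin t * indicator {0..pi} t) \<in> borel_measurable lborel" by simp
    show "(\<lambda>t. indicator {0..pi} t * (cos t ^ n * E_omega \<alpha> \<beta> \<delta> (cos t) * phi a k t * wt a t)) \<in> borel_measurable lborel"
      using E_cos_meas[OF O] by measurable
    show "AE t in lborel. G (- cos t) * sin t * indicator {0..pi} t = indicator {0..pi} t * (cos t ^ n * E_omega \<alpha> \<beta> \<delta> (cos t) * phi a k t * wt a t)"
      using AE_lborel_singleton[of 0] AE_lborel_singleton[of pi]
    proof eventually_elim
      case (elim t)
      show ?case
      proof (cases "t \<in> {0..pi}")
        case True
        then have "0 < t" "t < pi" using elim by auto
        then show ?thesis using Fint_cos_sin[OF _ _ a, of t] True by (simp add: GF F_def)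
      qed simp
    qed
  qed
  show ?thesis using lhs sub rhs unfolding F_def by simp
qed

lemma psf: "product_sigma_finite (\<lambda>_::nat. lborel :: real measure)"
  unfolding product_sigma_finite_def by (simp add: lborel.sigma_finite_measure_axioms)

lemma det_expand:
  "Determinant.det (Matrix.mat N N (\<lambda>(i, j). A i (\<theta> j))) * (\<Prod>j<N. h j (\<theta> j))
   = (\<Sum>p\<in>{p. p permutes {0..<N}}. signof p * (\<Prod>j<N. A (inv_into UNIV p j) (\<theta> j) * h j (\<theta> j)))"
proof -
  have "Determinant.det (Matrix.mat N N (\<lambda>(i, j). A i (\<theta> j)))
     = (\<Sum>p\<in>{p. p permutes {0..<N}}. signof p * (\<Prod>i = 0..<N. A i (\<theta> (p i))))"
    by (subst det_def'[of _ N]) auto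
  moreover have "(\<Prod>i = 0..<N. A i (\<theta> (p i))) = (\<Prod>j<N. A (inv_into UNIV p j) (\<theta> j))" if p: "p permutes {0..<N}" for p
  proof -
    have bij: "bij_betw p {0..<N} {0..<N}" using permutes_imp_bij[OF p] .
    have "(\<Prod>j\<in>{0..<N}. A (inv_into UNIV p j) (\<theta> j)) = (\<Prod>i\<in>{0..<N}. A (inv_into UNIV p (p i)) (\<theta> (p i)))"
      by (rule prod.reindex_bij_betw[OF bij, symmetric])
    also have "\<dots> = (\<Prod>i = 0..<N. A i (\<theta> (p i)))"
      using permutes_inverses(2)[OF p] by simp
    finally show ?thesis by (simp add: atLeast0LessThan)
  qed
  ultimately show ?thesis
    by (simp add: sum_distrib_right prod.distrib mult.assoc)
qed

lemma int_expand:
  fixes A h :: "nat \<Rightarrow> real \<Rightarrow> real"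
  assumes int: "\<And>i j. integrable lborel (\<lambda>t. A i t * h j t)"
  shows "integrable (Pi\<^sub>M {..<N} (\<lambda>_. lborel)) (\<lambda>\<theta>. Determinant.det (Matrix.mat N N (\<lambda>(i, j). A i (\<theta> j))) * (\<Prod>j<N. h j (\<theta> j)))"
    and "integral\<^sup>L (Pi\<^sub>M {..<N} (\<lambda>_. lborel)) (\<lambda>\<theta>. Determinant.det (Matrix.mat N N (\<lambda>(i, j). A i (\<theta> j))) * (\<Prod>j<N. h j (\<theta> j)))
         = (\<Sum>p\<in>{p. p permutes {0..<N}}. signof p * (\<Prod>j<N. integral\<^sup>L lborel (\<lambda>t. A (inv_into UNIV p j) t * h j t)))"
proof -
  interpret product_sigma_finite "\<lambda>_::nat. lborel :: real measure" by (rule psf)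
  have e: "(\<lambda>\<theta>. Determinant.det (Matrix.mat N N (\<lambda>(i, j). A i (\<theta> j))) * (\<Prod>j<N. h j (\<theta> j)))
     = (\<lambda>\<theta>. \<Sum>p\<in>{p. p permutes {0..<N}}. signof p * (\<Prod>j<N. A (inv_into UNIV p j) (\<theta> j) * h j (\<theta> j)))"
    by (rule ext, rule det_expand)
  have ip: "integrable (Pi\<^sub>M {..<N} (\<lambda>_. lborel)) (\<lambda>\<theta>. \<Prod>j<N. A (inv_into UNIV p j) (\<theta> j) * h j (\<theta> j))" for p
    by (rule product_integrable_prod) (auto intro: int)
  show "integrable (Pi\<^sub>M {..<N} (\<lambda>_. lborel)) (\<lambda>\<theta>. Determinant.det (Matrix.mat N N (\<lambda>(i, j). A i (\<theta> j))) * (\<Prod>j<N. h j (\<theta> j)))"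
    unfolding e by (rule Bochner_Integration.integrable_sum, rule Bochner_Integration.integrable_mult_right, rule ip)
  have "integral\<^sup>L (Pi\<^sub>M {..<N} (\<lambda>_. lborel)) (\<lambda>\<theta>. \<Sum>p\<in>{p. p permutes {0..<N}}. signof p * (\<Prod>j<N. A (inv_into UNIV p j) (\<theta> j) * h j (\<theta> j)))
     = (\<Sum>p\<in>{p. p permutes {0..<N}}. signof p * integral\<^sup>L (Pi\<^sub>M {..<N} (\<lambda>_. lborel)) (\<lambda>\<theta>. \<Prod>j<N. A (inv_into UNIV p j) (\<theta> j) * h j (\<theta> j)))"
    by (subst Bochner_Integration.integral_sum) (auto intro!: Bochner_Integration.integrable_mult_right ip simp: Bochner_Integration.integral_mult_right_zero)
  also have "\<dots> = (\<Sum>p\<in>{p. p permutes {0..<N}}. signof p * (\<Prod>j<N. integral\<^sup>L lborel (\<lambda>t. A (inv_into UNIV p j) t * h j t)))"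
    by (intro sum.cong refl arg_cong2[where f="(*)"] product_integral_prod) (auto intro: int)
  finally show "integral\<^sup>L (Pi\<^sub>M {..<N} (\<lambda>_. lborel)) (\<lambda>\<theta>. Determinant.det (Matrix.mat N N (\<lambda>(i, j). A i (\<theta> j))) * (\<Prod>j<N. h j (\<theta> j)))
         = (\<Sum>p\<in>{p. p permutes {0..<N}}. signof p * (\<Prod>j<N. integral\<^sup>L lborel (\<lambda>t. A (inv_into UNIV p j) t * h j t)))"
    unfolding e .
qed

definition lv :: "nat \<Rightarrow> nat list \<Rightarrow> nat \<Rightarrow> nat" where "lv N lam i = lam ! i + (N - 1 - i)"

lemma JN_le: "lam \<in> JN N \<Longrightarrow> i < j \<Longrightarrow> j < N \<Longrightarrow> lam ! j \<le> lam ! i"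
  unfolding JN_def using sorted_wrt_nth_less[of "(\<ge>)" lam i j] by auto

lemma lv_strict: "lam \<in> JN N \<Longrightarrow> i < j \<Longrightarrow> j < N \<Longrightarrow> lv N lam j < lv N lam i"
  unfolding lv_def using JN_le[of lam N i j] by linarith

lemma lv_anti: "lam \<in> JN N \<Longrightarrow> i \<le> j \<Longrightarrow> j < N \<Longrightarrow> lv N lam j \<le> lv N lam i"
  using lv_strict[of lam N i j] by (cases "i = j") auto

lemma smono_perm_id:
  fixes q :: "nat \<Rightarrow> nat" and N :: nat
  assumes q: "q permutes {0..<N}" and mono: "\<And>i j. i < j \<Longrightarrow> j < N \<Longrightarrow> q i < q j"
  shows "i < N \<Longrightarrow> q i = i"
proof -
  assume i: "i < N"
  have ge: "i < N \<Longrightarrow> i \<le> q i" for i :: nat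
  proof (induction i)
    case (Suc i) then show ?case using mono[of i "Suc i"] by simp
  qed simp
  have up: "i + d < N \<Longrightarrow> q i + d \<le> q (i + d)" for d :: nat
  proof (induction d)
    case (Suc d) then show ?case using mono[of "i + d" "i + Suc d"] by simp
  qed simp
  have "q (i + (N - 1 - i)) < N"
    using permutes_in_image[OF q, of "i + (N - 1 - i)"] i by simp
  moreover have "q i + (N - 1 - i) \<le> q (i + (N - 1 - i))" using up[of "N - 1 - i"] i by simp
  ultimately have "q i \<le> i" using i by linarith
  with ge[OF i] show ?thesis by simp
qed

lemma uniq:
  assumes lam: "lam \<in> JN N" and kap: "kap \<in> JN N" and p: "p permutes {0..<N}"
    and eq: "\<And>j. j < N \<Longrightarrow> lv N lam (inv_into UNIV p j) = lv N kap j"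
  shows "lam = kap \<and> p = id"
proof -
  let ?q = "inv_into UNIV p"
  have q: "?q permutes {0..<N}" using permutes_inv[OF p] .
  have mono: "?q i < ?q j" if ij: "i < j" "j < N" for i j
  proof (rule ccontr)
    assume "\<not> ?q i < ?q j"
    then have "?q j \<le> ?q i" by simp
    moreover have "?q i < N" using permutes_in_image[OF q, of i] ij by simp
    ultimately have "lv N lam (?q i) \<le> lv N lam (?q j)" using lv_anti[OF lam] by blast
    then have "lv N kap i \<le> lv N kap j" using eq ij by simp
    with lv_strict[OF kap ij] show False by simp
  qed
  have qid: "\<And>j. j < N \<Longrightarrow> ?q j = j" using smono_perm_id[OF q mono] by blast
  have "p j = j" for j
  proof (cases "j < N")
    case True
    then have "p (?q j) = j" using permutes_inverses(1)[OF p] by simp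
    then show ?thesis using qid[OF True] by simp
  next
    case False then show ?thesis using permutes_not_in[OF p] by simp
  qed
  then have "p = id" by auto
  moreover have "lam = kap"
  proof (rule nth_equalityI)
    show "length lam = length kap" using lam kap unfolding JN_def by simp
    fix j assume "j < length lam"
    then have j: "j < N" using lam unfolding JN_def by simp
    show "lam ! j = kap ! j" using eq[OF j] qid[OF j] unfolding lv_def by simp
  qed
  ultimately show ?thesis by simp
qed

lemma ratio_ge1:
  fixes li lj mi mj :: real
  assumes "0 < mi - mj" "0 < mi + mj" "mi - mj \<le> li - lj" "mi + mj \<le> li + lj"
  shows "1 \<le> (li\<^sup>2 - lj\<^sup>2) / (mi\<^sup>2 - mj\<^sup>2)"
proof -
  have "mi\<^sup>2 - mj\<^sup>2 = (mi - mj) * (mi + mj)" by (simp add: algebra_simps power2_eq_square)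
  moreover have "li\<^sup>2 - lj\<^sup>2 = (li - lj) * (li + lj)" by (simp add: algebra_simps power2_eq_square)
  moreover have "(mi - mj) * (mi + mj) \<le> (li - lj) * (li + lj)"
    using assms by (intro mult_mono) auto
  moreover have "0 < (mi - mj) * (mi + mj)" using assms by simp
  ultimately show ?thesis by simp
qed

lemma dimB_ge1:
  assumes lam: "lam \<in> JN N"
  shows "1 \<le> dimB N lam"
proof -
  define l where "l = (\<lambda>i. real (lam ! i) + real N - real i - 1/2)"
  define m where "m = (\<lambda>i. real N - real i - 1/2)"
  have A: "1 \<le> (\<Prod>i<N. \<Prod>j\<in>{i<..<N}. ((l i)\<^sup>2 - (l j)\<^sup>2) / ((m i)\<^sup>2 - (m j)\<^sup>2))"
  proof (intro prod_ge_1 ballI)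
    fix i j assume i: "i \<in> {..<N}" and j: "j \<in> {i<..<N}"
    have "lam ! j \<le> lam ! i" using JN_le[OF lam, of i j] i j by auto
    then show "1 \<le> ((l i)\<^sup>2 - (l j)\<^sup>2) / ((m i)\<^sup>2 - (m j)\<^sup>2)"
      using i j unfolding l_def m_def by (intro ratio_ge1) auto
  qed
  have B: "1 \<le> (\<Prod>i<N. l i / m i)"
  proof (intro prod_ge_1 ballI)
    fix i assume i: "i \<in> {..<N}"
    then have "0 < m i" "m i \<le> l i" unfolding l_def m_def by auto
    then show "1 \<le> l i / m i" by simp
  qed
  have "dimB N lam = (\<Prod>i<N. \<Prod>j\<in>{i<..<N}. ((l i)\<^sup>2 - (l j)\<^sup>2) / ((m i)\<^sup>2 - (m j)\<^sup>2)) * (\<Prod>i<N. l i / m i)"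
    unfolding dimB_def l_def m_def Let_def ..
  then show ?thesis using A B mult_mono[of 1 _ 1 "\<Prod>i<N. l i / m i"] by simp
qed

lemma dimD_ge1:
  assumes lam: "lam \<in> JN N"
  shows "1 \<le> dimD N lam"
proof -
  define l where "l = (\<lambda>i. real (lam ! i) + real N - real i - 1)"
  define m where "m = (\<lambda>i. real N - real i - 1)"
  have A: "1 \<le> (\<Prod>i<N. \<Prod>j\<in>{i<..<N}. ((l i)\<^sup>2 - (l j)\<^sup>2) / ((m i)\<^sup>2 - (m j)\<^sup>2))"
  proof (intro prod_ge_1 ballI)
    fix i j assume i: "i \<in> {..<N}" and j: "j \<in> {i<..<N}"
    have "lam ! j \<le> lam ! i" using JN_le[OF lam, of i j] i j by auto
    then show "1 \<le> ((l i)\<^sup>2 - (l j)\<^sup>2) / ((m i)\<^sup>2 - (m j)\<^sup>2)"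
      using i j unfolding l_def m_def by (intro ratio_ge1) auto
  qed
  have "dimD N lam = (\<Prod>i<N. \<Prod>j\<in>{i<..<N}. ((l i)\<^sup>2 - (l j)\<^sup>2) / ((m i)\<^sup>2 - (m j)\<^sup>2))"
    unfolding dimD_def l_def m_def Let_def ..
  then show ?thesis using A by simp
qed

lemma vdm_nz:
  fixes x :: "nat \<Rightarrow> real"
  assumes inj: "inj_on x {..<N}"
  shows "Determinant.det (Matrix.mat N N (\<lambda>(i, j). x j ^ (N - 1 - i))) \<noteq> 0"
proof
  define M where "M = Matrix.mat N N (\<lambda>(i, j). x j ^ (N - 1 - i))"
  assume "Determinant.det (Matrix.mat N N (\<lambda>(i, j). x j ^ (N - 1 - i))) = 0"
  then have "Determinant.det (transpose_mat M) = 0" unfolding M_def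
    by (subst det_transpose[of _ N]) auto
  then obtain v where v: "v \<in> carrier_vec N" "v \<noteq> 0\<^sub>v N" "transpose_mat M *\<^sub>v v = 0\<^sub>v N"
    using det_0_iff_vec_prod_zero[of "transpose_mat M" N] unfolding M_def by auto
  define P where "P = (\<Sum>j<N. monom (vec_index v j) (N - 1 - j))"
  have polyP: "poly P y = (\<Sum>j<N. vec_index v j * y ^ (N - 1 - j))" for y
    unfolding P_def by (simp add: poly_sum poly_monom)
  have root: "poly P (x i) = 0" if i: "i < N" for i
  proof -
    have "vec_index (transpose_mat M *\<^sub>v v) i = 0" using v(3) i by simp
    moreover have "vec_index (transpose_mat M *\<^sub>v v) i = (\<Sum>j<N. x i ^ (N - 1 - j) * vec_index v j)"
      using i v(1) unfolding M_def by (simp add: scalar_prod_def atLeast0LessThan)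
    ultimately show ?thesis unfolding polyP by (simp add: mult.commute)
  qed
  have N: "N > 0"
  proof (rule ccontr)
    assume "\<not> N > 0"
    then have "N = 0" by simp
    then have "v = 0\<^sub>v N" using v(1) by auto
    with v(2) show False by simp
  qed
  have degP: "Polynomial.degree P \<le> N - 1"
    unfolding P_def by (rule degree_sum_le) (auto intro: order_trans[OF degree_monom_le])
  have P0: "P = 0"
  proof (rule ccontr)
    assume nz: "P \<noteq> 0"
    have "x ` {..<N} \<subseteq> {y. poly P y = 0}" using root by auto
    then have "card (x ` {..<N}) \<le> card {y. poly P y = 0}"
      by (intro card_mono poly_roots_finite nz)
    also have "\<dots> \<le> Polynomial.degree P" by (rule card_poly_roots_bound[OF nz])
    finally have "N \<le> N - 1" using card_image[OF inj] degP by simp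
    with N show False by simp
  qed
  have "vec_index v j = 0" if j: "j < N" for j
  proof -
    have "Polynomial.coeff P (N - 1 - j) = (\<Sum>i<N. (if N - 1 - i = N - 1 - j then vec_index v i else 0))"
      unfolding P_def by (simp add: coeff_sum coeff_monom)
    also have "\<dots> = (\<Sum>i\<in>{j}. vec_index v i)"
      by (rule sum.mono_neutral_cong_right) (use j in auto)
    finally have "Polynomial.coeff P (N - 1 - j) = vec_index v j" by simp
    then show ?thesis using P0 by simp
  qed
  then have "v = 0\<^sub>v N" using v(1) by (intro eq_vecI) auto
  with v(2) show False by simp
qed

definition sa :: "real \<Rightarrow> real" where "sa a = (if a = 1/2 then 1 else 2)"
definition den :: "real \<Rightarrow> nat \<Rightarrow> nat list \<Rightarrow> real" where
  "den a N lam = (if a = 1/2 then dimB N lam else 2 * dimD N lam)"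
definition numM :: "real \<Rightarrow> nat \<Rightarrow> nat list \<Rightarrow> (nat \<Rightarrow> real) \<Rightarrow> real" where
  "numM a N lam \<theta> = Determinant.det (Matrix.mat N N (\<lambda>(i, j). sa a * phi a (lv N lam i) (\<theta> j)))"

lemma den_ge1: "lam \<in> JN N \<Longrightarrow> 1 \<le> den a N lam"
  unfolding den_def using dimB_ge1[of lam N] dimD_ge1[of lam N] by auto

lemma char_denom_nz:
  assumes "inj_on (\<lambda>j. cos (\<theta> j)) {..<N}"
  shows "char_denom N \<theta> \<noteq> 0"
proof -
  have "inj_on (\<lambda>j. 2 * cos (\<theta> j)) {..<N}" using assms by (auto simp: inj_on_def)
  from vdm_nz[OF this] show ?thesis unfolding char_denom_def .
qed

lemma det_cols_eq0:
  fixes f :: "nat \<Rightarrow> real \<Rightarrow> real"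
  assumes "i < N" "j < N" "i \<noteq> j" "\<theta> i = \<theta> j"
  shows "Determinant.det (Matrix.mat N N (\<lambda>(r, c). f r (\<theta> c))) = 0"
  by (rule det_identical_columns[of _ N i j]) (use assms in auto)

lemma noninj_cos:
  assumes "\<not> inj_on (\<lambda>j. cos (\<theta> j)) {..<N}"
  obtains i j where "i < N" "j < N" "i \<noteq> j" "cos (\<theta> i) = cos (\<theta> j)"
  using assms unfolding inj_on_def by auto

lemma pointwise:
  assumes isP: "is_P_omega \<alpha> \<beta> \<delta> N a P" and a: "a = 1/2 \<or> a = -1/2"
  shows "((\<lambda>lam. P lam * numM a N lam \<theta> / den a N lam) has_sum
           (char_denom N \<theta> * (\<Prod>j<N. E_omega \<alpha> \<beta> \<delta> (cos (\<theta> j))))) (JN N)"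
proof (cases "inj_on (\<lambda>j. cos (\<theta> j)) {..<N}")
  case True
  define D where "D = char_denom N \<theta>"
  have D: "D \<noteq> 0" unfolding D_def by (rule char_denom_nz[OF True])
  show ?thesis
  proof (cases "a = 1/2")
    case a1: True
    have h: "((\<lambda>lam. P lam * chiB N lam \<theta> / dimB N lam) has_sum (\<Prod>j<N. E_omega \<alpha> \<beta> \<delta> (cos (\<theta> j)))) (JN N)"
      using isP True a1 unfolding is_P_omega_def by auto
    have "((\<lambda>lam. D * (P lam * chiB N lam \<theta> / dimB N lam)) has_sum (D * (\<Prod>j<N. E_omega \<alpha> \<beta> \<delta> (cos (\<theta> j))))) (JN N)"
      by (rule has_sum_cmult_right[OF h])
    moreover have "D * (P lam * chiB N lam \<theta> / dimB N lam) = P lam * numM a N lam \<theta> / den a N lam" for lam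
    proof -
      have "numM a N lam \<theta> = Determinant.det (Matrix.mat N N (\<lambda>(i, j). Jp (lam ! i + (N - 1 - i)) (cos (\<theta> j))))"
        unfolding numM_def sa_def phi_def Jac_def lv_def a1 by simp
      then show ?thesis using D unfolding chiB_def den_def D_def[symmetric] a1 by simp
    qed
    ultimately show ?thesis unfolding D_def by simp
  next
    case a2: False
    then have a2': "a = -1/2" using a by simp
    have h: "((\<lambda>lam. P lam * XD N lam \<theta> / (2 * dimD N lam)) has_sum (\<Prod>j<N. E_omega \<alpha> \<beta> \<delta> (cos (\<theta> j)))) (JN N)"
      using isP True a2 unfolding is_P_omega_def by auto
    have "((\<lambda>lam. D * (P lam * XD N lam \<theta> / (2 * dimD N lam))) has_sum (D * (\<Prod>j<N. E_omega \<alpha> \<beta> \<delta> (cos (\<theta> j))))) (JN N)"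
      by (rule has_sum_cmult_right[OF h])
    moreover have "D * (P lam * XD N lam \<theta> / (2 * dimD N lam)) = P lam * numM a N lam \<theta> / den a N lam" for lam
    proof -
      have "numM a N lam \<theta> = Determinant.det (Matrix.mat N N (\<lambda>(i, j). 2 * Jm (lam ! i + (N - 1 - i)) (cos (\<theta> j))))"
        unfolding numM_def sa_def phi_def Jac_def lv_def a2' by simp
      then show ?thesis using D unfolding XD_def den_def D_def[symmetric] a2' by simp
    qed
    ultimately show ?thesis unfolding D_def by simp
  qed
next
  case False
  then obtain i j where ij: "i < N" "j < N" "i \<noteq> j" "cos (\<theta> i) = cos (\<theta> j)" by (rule noninj_cos)
  define c where "c k = cos (\<theta> k)" for k
  have c: "c i = c j" using ij unfolding c_def by simp
  have D0: "char_denom N \<theta> = 0"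
  proof -
    have "char_denom N \<theta> = Determinant.det (Matrix.mat N N (\<lambda>(r, s). (\<lambda>r x. (2 * x) ^ (N - 1 - r)) r (c s)))"
      unfolding char_denom_def c_def by simp
    also have "\<dots> = 0" by (rule det_cols_eq0[OF ij(1-3) c])
    finally show ?thesis .
  qed
  have N0: "numM a N lam \<theta> = 0" for lam
  proof -
    have "numM a N lam \<theta> = Determinant.det (Matrix.mat N N (\<lambda>(r, s). (\<lambda>r x. sa a * Jac a (lv N lam r) x) r (c s)))"
      unfolding numM_def c_def phi_def by simp
    also have "\<dots> = 0" by (rule det_cols_eq0[OF ij(1-3) c])
    finally show ?thesis .
  qed
  show ?thesis using D0 N0 by simp
qed

lemma has_sum_integral:
  fixes f :: "nat list \<Rightarrow> 'x \<Rightarrow> real" and M :: "'x measure"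
  assumes hs: "\<And>x. ((\<lambda>l. f l x) has_sum S x) A"
    and int: "\<And>l. l \<in> A \<Longrightarrow> integrable M (f l)"
    and bnd: "\<And>l x. l \<in> A \<Longrightarrow> x \<in> space M \<Longrightarrow> \<bar>f l x\<bar> \<le> c l * G x"
    and G: "integrable M G"
    and c: "c summable_on A" "\<And>l. l \<in> A \<Longrightarrow> 0 \<le> c l"
  shows "((\<lambda>l. integral\<^sup>L M (f l)) has_sum integral\<^sup>L M S) A"
proof -
  define f' where "f' l x = (if l \<in> A then f l x else 0)" for l x
  define c' where "c' l = (if l \<in> A then c l else 0)" for l
  define e where "e = from_nat_into (UNIV :: nat list set)"
  have bij: "bij_betw e UNIV UNIV" unfolding e_def
    by (rule bij_betw_from_nat_into) (auto simp: infinite_UNIV_listI)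
  define F where "F n x = f' (e n) x" for n x
  have hs': "((\<lambda>l. f' l x) has_sum S x) UNIV" for x
    using hs[of x] by (subst has_sum_cong_neutral[where T=A and g="\<lambda>l. f l x"]) (auto simp: f'_def)
  have hsF: "((\<lambda>n. F n x) has_sum S x) UNIV" for x
    unfolding F_def using has_sum_reindex_bij_betw[OF bij, of "\<lambda>l. f' l x"] hs' by simp
  have sumsF: "(\<lambda>n. F n x) sums S x" for x using has_sum_imp_sums[OF hsF] .
  have c'0: "0 \<le> c' l" for l using c(2) unfolding c'_def by simp
  have c'sum: "c' summable_on UNIV"
    using c(1) by (subst summable_on_cong_neutral[where T=A and g=c]) (auto simp: c'_def)
  have ce: "summable (\<lambda>n. c' (e n))"
  proof -
    have "(\<lambda>n. c' (e n)) summable_on UNIV" using summable_on_reindex_bij_betw[OF bij, of c'] c'sum by simp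
    then show ?thesis using summable_on_UNIV_nonneg_real_iff[of "\<lambda>n. c' (e n)"] c'0 by simp
  qed
  have intF: "integrable M (F n)" for n unfolding F_def f'_def using int by (cases "e n \<in> A") auto
  have bndF: "\<bar>F n x\<bar> \<le> c' (e n) * G x" if "x \<in> space M" for n x
    unfolding F_def f'_def c'_def using bnd[OF _ that] by auto
  have sumnorm: "summable (\<lambda>n. norm (F n x))" if "x \<in> space M" for x
    by (rule summable_comparison_test[OF _ summable_mult2[OF ce, of "G x"]]) (use bndF[OF that] in auto)
  have intnorm: "integral\<^sup>L M (\<lambda>x. norm (F n x)) \<le> c' (e n) * integral\<^sup>L M G" for n
  proof -
    have "integral\<^sup>L M (\<lambda>x. norm (F n x)) \<le> integral\<^sup>L M (\<lambda>x. c' (e n) * G x)"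
      by (rule integral_mono) (use intF G bndF in auto)
    then show ?thesis by simp
  qed
  have sumint: "summable (\<lambda>n. integral\<^sup>L M (\<lambda>x. norm (F n x)))"
    by (rule summable_comparison_test[OF _ summable_mult2[OF ce, of "integral\<^sup>L M G"]])
       (use intnorm in \<open>auto intro!: integral_nonneg_AE\<close>)
  have sI: "(\<lambda>n. integral\<^sup>L M (F n)) sums integral\<^sup>L M (\<lambda>x. \<Sum>n. F n x)"
    by (rule sums_integral[OF intF]) (use sumnorm sumint in auto)
  have "(\<lambda>x. \<Sum>n. F n x) = S" using sumsF by (auto simp: sums_iff fun_eq_iff)
  with sI have sI': "(\<lambda>n. integral\<^sup>L M (F n)) sums integral\<^sup>L M S" by simp
  have nI: "summable (\<lambda>n. norm (integral\<^sup>L M (F n)))"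
    by (rule summable_comparison_test[OF _ sumint]) (auto intro: integral_norm_bound)
  have "((\<lambda>n. integral\<^sup>L M (F n)) has_sum integral\<^sup>L M S) UNIV"
    by (rule norm_summable_imp_has_sum[OF nI sI'])
  then have "((\<lambda>l. integral\<^sup>L M (f' l)) has_sum integral\<^sup>L M S) UNIV"
    unfolding F_def using has_sum_reindex_bij_betw[OF bij, of "\<lambda>l. integral\<^sup>L M (f' l)"] by simp
  then show ?thesis
  proof (subst (asm) has_sum_cong_neutral[where T=A and g="\<lambda>l. integral\<^sup>L M (f l)"])
    have f'eq: "f' l = (if l \<in> A then f l else (\<lambda>_. 0))" for l by (auto simp: f'_def fun_eq_iff)
    show "\<And>x. x \<in> UNIV - A \<Longrightarrow> integral\<^sup>L M (f' x) = 0" by (simp add: f'eq)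
    show "\<And>x. x \<in> UNIV \<inter> A \<Longrightarrow> integral\<^sup>L M (f' x) = integral\<^sup>L M (f x)" by (simp add: f'eq)
  qed auto
qed

lemma int_way1:
  assumes a: "a = 1/2 \<or> a = -1/2"
  shows "integrable lborel (\<lambda>t. sa a * phi a l t * (indicator {0..pi} t * phi a k t * wt a t))"
    and "integral\<^sup>L lborel (\<lambda>t. sa a * phi a l t * (indicator {0..pi} t * phi a k t * wt a t)) = sa a * (if l = k then nu a k else 0)"
proof -
  have e: "(\<lambda>t. sa a * phi a l t * (indicator {0..pi} t * phi a k t * wt a t))
      = (\<lambda>t. sa a * (indicator {0..pi} t * (phi a l t * phi a k t * wt a t)))"
    by (auto simp: fun_eq_iff mult_ac)
  have i: "integrable lborel (\<lambda>t. indicator {0..pi} t * (phi a l t * phi a k t * wt a t))"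
  proof (rule int_bdd)
    show "(\<lambda>t. phi a l t * phi a k t * wt a t) \<in> borel_measurable borel" by measurable
    fix t
    have "\<bar>phi a l t * phi a k t * wt a t\<bar> = \<bar>phi a k t\<bar> * \<bar>phi a l t * wt a t\<bar>" by (simp add: abs_mult)
    also have "\<dots> \<le> (2 * real k + 1) * 2" by (intro mult_mono bound_phi bound_phi_wt) auto
    finally show "\<bar>phi a l t * phi a k t * wt a t\<bar> \<le> (2 * real k + 1) * 2" .
  qed
  show "integrable lborel (\<lambda>t. sa a * phi a l t * (indicator {0..pi} t * phi a k t * wt a t))"
    unfolding e using i by simp
  show "integral\<^sup>L lborel (\<lambda>t. sa a * phi a l t * (indicator {0..pi} t * phi a k t * wt a t)) = sa a * (if l = k then nu a k else 0)"
    unfolding e by (simp add: orth[OF a])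
qed

lemma sa_pos: "sa a > 0" unfolding sa_def by simp

lemma bound_way1:
  "\<bar>sa a * phi a l t * (indicator {0..pi} t * phi a k t * wt a t)\<bar> \<le> indicator {0..pi} t * (sa a * (2 * real k + 1) * 2)"
proof (cases "t \<in> {0..pi}")
  case True
  have "\<bar>sa a * phi a l t * (indicator {0..pi} t * phi a k t * wt a t)\<bar> = sa a * (\<bar>phi a k t\<bar> * \<bar>phi a l t * wt a t\<bar>)"
    using True sa_pos[of a] by (simp add: abs_mult mult_ac)
  also have "\<dots> \<le> sa a * ((2 * real k + 1) * 2)"
    using sa_pos[of a] by (intro mult_left_mono mult_mono bound_phi bound_phi_wt) auto
  finally show ?thesis using True by (simp add: mult_ac)
qed simp

lemma int_way2:
  assumes O: "in_Omega \<alpha> \<beta> \<delta>" and a: "a = 1/2 \<or> a = -1/2"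
  shows "integrable lborel (\<lambda>t. (2 * cos t) ^ (N - j) * (E_omega \<alpha> \<beta> \<delta> (cos t) * (indicator {0..pi} t * phi a k t * wt a t)))"
    and "integral\<^sup>L lborel (\<lambda>t. (2 * cos t) ^ (N - j) * (E_omega \<alpha> \<beta> \<delta> (cos t) * (indicator {0..pi} t * phi a k t * wt a t)))
         = 2 ^ (N - j) * (nu a k * f_fun \<alpha> \<beta> \<delta> N a j k)"
proof -
  have e: "(\<lambda>t. (2 * cos t) ^ (N - j) * (E_omega \<alpha> \<beta> \<delta> (cos t) * (indicator {0..pi} t * phi a k t * wt a t)))
      = (\<lambda>t. 2 ^ (N - j) * (indicator {0..pi} t * (cos t ^ (N - j) * E_omega \<alpha> \<beta> \<delta> (cos t) * phi a k t * wt a t)))"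
    by (auto simp: fun_eq_iff mult_ac power_mult_distrib)
  have i: "integrable lborel (\<lambda>t. indicator {0..pi} t * (cos t ^ (N - j) * E_omega \<alpha> \<beta> \<delta> (cos t) * phi a k t * wt a t))"
  proof (rule int_bdd)
    show "(\<lambda>t. cos t ^ (N - j) * E_omega \<alpha> \<beta> \<delta> (cos t) * phi a k t * wt a t) \<in> borel_measurable borel"
      using E_cos_meas[OF O] by measurable
    fix t
    have h2: "\<bar>E_omega \<alpha> \<beta> \<delta> (cos t)\<bar> \<le> Ebd \<alpha> \<beta>" by (rule E_bound[OF O]) auto
    have "\<bar>cos t ^ (N - j) * E_omega \<alpha> \<beta> \<delta> (cos t) * phi a k t * wt a t\<bar>
        = \<bar>cos t ^ (N - j)\<bar> * \<bar>E_omega \<alpha> \<beta> \<delta> (cos t)\<bar> * \<bar>phi a k t * wt a t\<bar>" by (simp add: abs_mult)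
    also have "\<dots> \<le> 1 * Ebd \<alpha> \<beta> * 2"
      by (intro mult_mono cosn_bound h2 bound_phi_wt) (auto simp: Ebd_def)
    finally show "\<bar>cos t ^ (N - j) * E_omega \<alpha> \<beta> \<delta> (cos t) * phi a k t * wt a t\<bar> \<le> 1 * Ebd \<alpha> \<beta> * 2" .
  qed
  show "integrable lborel (\<lambda>t. (2 * cos t) ^ (N - j) * (E_omega \<alpha> \<beta> \<delta> (cos t) * (indicator {0..pi} t * phi a k t * wt a t)))"
    unfolding e using i by simp
  have "integral\<^sup>L lborel (\<lambda>t. indicator {0..pi} t * (cos t ^ (N - j) * E_omega \<alpha> \<beta> \<delta> (cos t) * phi a k t * wt a t))
      = (LINT x:{-1..1}|lborel. Fint \<alpha> \<beta> \<delta> (N - j) a k x)" by (rule fsub[OF O a, symmetric])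
  also have "\<dots> = nu a k * f_fun \<alpha> \<beta> \<delta> N a j k"
    unfolding f_fun_def Fint_def nu_def using Wt_pos[of a k] by simp
  finally show "integral\<^sup>L lborel (\<lambda>t. (2 * cos t) ^ (N - j) * (E_omega \<alpha> \<beta> \<delta> (cos t) * (indicator {0..pi} t * phi a k t * wt a t)))
         = 2 ^ (N - j) * (nu a k * f_fun \<alpha> \<beta> \<delta> N a j k)"
    unfolding e by simp
qed

lemma det_inv_form:
  "Determinant.det (Matrix.mat N N (\<lambda>(i, j). X i j)) = (\<Sum>p\<in>{p. p permutes {0..<N}}. signof p * (\<Prod>j<N. X (inv_into UNIV p j) j))"
  using det_expand[of N X id "\<lambda>_ _. 1"] by simp

lemma prod_inv_reindex:
  fixes p :: "nat \<Rightarrow> nat" and N :: nat and r :: "nat \<Rightarrow> 'b::comm_monoid_mult"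
  assumes p: "p permutes {0..<N}"
  shows "(\<Prod>j<N. r (inv_into UNIV p j)) = (\<Prod>i<N. r i)"
proof -
  have bij: "bij_betw (inv_into UNIV p) {0..<N} {0..<N}" using permutes_imp_bij[OF permutes_inv[OF p]] .
  have "(\<Prod>x\<in>{0..<N}. r (inv_into UNIV p x)) = prod r {0..<N}" by (rule prod.reindex_bij_betw[OF bij])
  then show ?thesis by (simp only: atLeast0LessThan)
qed

lemma det_scale:
  "Determinant.det (Matrix.mat N N (\<lambda>(i, j). r i * s j * X i j)) = (\<Prod>i<N. r i) * (\<Prod>j<N. s j) * Determinant.det (Matrix.mat N N (\<lambda>(i, j). X i j))"
proof -
  have "Determinant.det (Matrix.mat N N (\<lambda>(i, j). r i * s j * X i j))
     = (\<Sum>p\<in>{p. p permutes {0..<N}}. signof p * (\<Prod>j<N. r (inv_into UNIV p j) * s j * X (inv_into UNIV p j) j))"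
    by (rule det_inv_form)
  also have "\<dots> = (\<Sum>p\<in>{p. p permutes {0..<N}}. (\<Prod>i<N. r i) * (\<Prod>j<N. s j) * (signof p * (\<Prod>j<N. X (inv_into UNIV p j) j)))"
    by (intro sum.cong refl) (auto simp: prod.distrib prod_inv_reindex)
  also have "\<dots> = (\<Prod>i<N. r i) * (\<Prod>j<N. s j) * Determinant.det (Matrix.mat N N (\<lambda>(i, j). X i j))"
    by (simp add: det_inv_form sum_distrib_left)
  finally show ?thesis .
qed

lemma way1_sum:
  assumes lam: "lam \<in> JN N" and kap: "kap \<in> JN N"
  shows "(\<Sum>p\<in>{p. p permutes {0..<N}}. signof p * (\<Prod>j<N. sa a * (if lv N lam (inv_into UNIV p j) = lv N kap j then nu a (lv N kap j) else 0)))
       = (if lam = kap then (\<Prod>j<N. sa a * nu a (lv N kap j)) else 0)"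
proof -
  have t: "signof p * (\<Prod>j<N. sa a * (if lv N lam (inv_into UNIV p j) = lv N kap j then nu a (lv N kap j) else 0))
       = (if p = id \<and> lam = kap then (\<Prod>j<N. sa a * nu a (lv N kap j)) else 0)" if p: "p permutes {0..<N}" for p
  proof (cases "\<forall>j<N. lv N lam (inv_into UNIV p j) = lv N kap j")
    case True
    then have "lam = kap \<and> p = id" using uniq[OF lam kap p] by blast
    then show ?thesis by simp
  next
    case False
    then obtain j where j: "j < N" "lv N lam (inv_into UNIV p j) \<noteq> lv N kap j" by auto
    have "(\<Prod>j<N. sa a * (if lv N lam (inv_into UNIV p j) = lv N kap j then nu a (lv N kap j) else 0)) = 0"
      using j by (intro prod_zero) auto
    moreover have "\<not> (p = id \<and> lam = kap)" using j by (auto simp: inv_id)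
    ultimately show ?thesis by simp
  qed
  have "(\<Sum>p\<in>{p. p permutes {0..<N}}. signof p * (\<Prod>j<N. sa a * (if lv N lam (inv_into UNIV p j) = lv N kap j then nu a (lv N kap j) else 0)))
      = (\<Sum>p\<in>{p. p permutes {0..<N}}. (if p = id \<and> lam = kap then (\<Prod>j<N. sa a * nu a (lv N kap j)) else 0))"
    by (intro sum.cong refl t) simp
  also have "\<dots> = (if lam = kap then (\<Prod>j<N. sa a * nu a (lv N kap j)) else 0)"
  proof (cases "lam = kap")
    case True
    have "(\<Sum>p\<in>{p. p permutes {0..<N}}. (if p = id then (\<Prod>j<N. sa a * nu a (lv N kap j)) else 0))
        = (\<Prod>j<N. sa a * nu a (lv N kap j))"
      by (subst sum.delta) (auto simp: permutes_id finite_permutations)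
    then show ?thesis using True by simp
  qed simp
  finally show ?thesis .
qed

lemma pow2_prod: "(\<Prod>i<N. (2::real) ^ (N - 1 - i)) = 2 powr (real N * (real N - 1) / 2)"
proof -
  have s: "(\<Sum>i<N. N - 1 - i) = (\<Sum>i<N. i)"
    using sum.nat_diff_reindex[of "\<lambda>i. i" N] by (simp add: Suc_diff_Suc)
  have g: "2 * real (\<Sum>i<N. i) = real N * (real N - 1)"
    by (induction N) (auto simp: algebra_simps)
  have r: "real (\<Sum>i<N. i) = real N * (real N - 1) / 2" using g by simp
  have "(\<Prod>i<N. (2::real) ^ (N - 1 - i)) = 2 ^ (\<Sum>i<N. N - 1 - i)" by (simp only: power_sum)
  also have "\<dots> = 2 ^ (\<Sum>i<N. i)" by (simp only: s)
  also have "\<dots> = 2 powr real (\<Sum>i<N. i)" by (rule powr_realpow[symmetric]) simp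
  also have "\<dots> = 2 powr (real N * (real N - 1) / 2)" by (simp only: r)
  finally show ?thesis .
qed

lemma delta_has_sum: "kap \<in> A \<Longrightarrow> ((\<lambda>l. if l = kap then v else (0::real)) has_sum v) A"
  by (subst has_sum_cong_neutral[where T="{kap}" and g="\<lambda>_. v"]) (auto simp: has_sum_finite[of "{kap}" "\<lambda>_. v", simplified])

lemma abs_prod_real: "\<bar>\<Prod>i\<in>A. f i\<bar> = (\<Prod>i\<in>A. \<bar>f i :: real\<bar>)"
  by (induct A rule: infinite_finite_induct) (auto simp: abs_mult)

lemma det_transp_eq:
  "Determinant.det (Matrix.mat N N (\<lambda>(i, j). F i j)) = Determinant.det (Matrix.mat N N (\<lambda>(i, j). F j i))"
proof -
  have "transpose_mat (Matrix.mat N N (\<lambda>(i, j). F j i)) = Matrix.mat N N (\<lambda>(i, j). F i j)"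
    by (rule eq_matI) auto
  then show ?thesis using det_transpose[of "Matrix.mat N N (\<lambda>(i, j). F j i)" N] by simp
qed

theorem theorem2p8:
  fixes \<alpha> \<beta> :: "nat \<Rightarrow> real" and \<delta> a :: real and N :: nat
    and P :: "nat list \<Rightarrow> real" and lam :: "nat list"
  assumes "in_Omega \<alpha> \<beta> \<delta>"
    and "N \<ge> 1"
    and "a = 1/2 \<or> a = -1/2"
    and "is_P_omega \<alpha> \<beta> \<delta> N a P"
    and "lam \<in> JN N"
  shows "P lam = C_const N a *
           Determinant.det (Matrix.mat N N (\<lambda>(i, j). f_fun \<alpha> \<beta> \<delta> N a (j + 1) (lam ! i + (N - 1 - i))))
           * dim_a N a lam"
proof -
  note O = assms(1) and a = assms(3) and isP = assms(4) and kap = assms(5)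
  define k where "k j = lv N lam j" for j
  define h where "h j t = indicator {0..pi} t * phi a (k j) t * wt a t" for j t
  define \<mu> where "\<mu> = Pi\<^sub>M {..<N} (\<lambda>_. lborel :: real measure)"
  define S where "S \<theta> = char_denom N \<theta> * (\<Prod>j<N. E_omega \<alpha> \<beta> \<delta> (cos (\<theta> j))) * (\<Prod>j<N. h j (\<theta> j))" for \<theta>
  define T where "T l \<theta> = P l * numM a N l \<theta> / den a N l * (\<Prod>j<N. h j (\<theta> j))" for l \<theta>
  have P0: "\<And>l. l \<in> JN N \<Longrightarrow> 0 \<le> P l" and Psum: "(P has_sum 1) (JN N)"
    using isP unfolding is_P_omega_def by auto
  have hs: "((\<lambda>l. T l \<theta>) has_sum S \<theta>) (JN N)" for \<theta>
    unfolding T_def S_def by (rule has_sum_cmult_left[OF pointwise[OF isP a]])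
  define A where "A l i t = sa a * phi a (lv N l i) t" for l i t
  have numM_eq: "numM a N l \<theta> = Determinant.det (Matrix.mat N N (\<lambda>(i, j). A l i (\<theta> j)))" for l \<theta>
    unfolding numM_def A_def ..
  have intA: "integrable lborel (\<lambda>t. A l i t * h j t)" for l i j
    unfolding A_def h_def by (rule int_way1(1)[OF a])
  have intA2: "integral\<^sup>L lborel (\<lambda>t. A l i t * h j t) = sa a * (if lv N l i = k j then nu a (k j) else 0)" for l i j
    unfolding A_def h_def by (rule int_way1(2)[OF a])
  define v where "v = P lam / den a N lam * (\<Prod>j<N. sa a * nu a (k j))"
  have Tint: "integrable \<mu> (T l)" and Tval: "l \<in> JN N \<Longrightarrow> integral\<^sup>L \<mu> (T l) = (if l = lam then v else 0)" for l
  proof -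
    have eT: "T l = (\<lambda>\<theta>. P l / den a N l * (Determinant.det (Matrix.mat N N (\<lambda>(i, j). A l i (\<theta> j))) * (\<Prod>j<N. h j (\<theta> j))))"
      unfolding T_def numM_eq by (auto simp: fun_eq_iff)
    show "integrable \<mu> (T l)" unfolding eT \<mu>_def
      by (rule Bochner_Integration.integrable_mult_right, rule int_expand(1), rule intA)
    assume l: "l \<in> JN N"
    have "integral\<^sup>L \<mu> (T l) = P l / den a N l *
        (\<Sum>p\<in>{p. p permutes {0..<N}}. signof p * (\<Prod>j<N. integral\<^sup>L lborel (\<lambda>t. A l (inv_into UNIV p j) t * h j t)))"
      unfolding eT \<mu>_def by (simp only: Bochner_Integration.integral_mult_right_zero int_expand(2)[OF intA])
    also have "\<dots> = P l / den a N l * (if l = lam then (\<Prod>j<N. sa a * nu a (lv N lam j)) else 0)"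
      unfolding intA2 k_def by (simp only: way1_sum[OF l kap])
    finally show "integral\<^sup>L \<mu> (T l) = (if l = lam then v else 0)" unfolding v_def k_def by simp
  qed
  define B where "B j = sa a * (2 * real (k j) + 1) * 2" for j
  define G where "G \<theta> = real (card {p. p permutes {0..<N}}) * (\<Prod>j<N. indicator {0..pi} (\<theta> j) * B j)" for \<theta>
  have G0: "0 \<le> G \<theta>" for \<theta>
    unfolding G_def B_def using sa_pos[of a] by (intro mult_nonneg_nonneg prod_nonneg) auto
  have Gint: "integrable \<mu> G"
  proof -
    interpret product_sigma_finite "\<lambda>_::nat. lborel :: real measure" by (rule psf)
    have "integrable \<mu> (\<lambda>\<theta>. \<Prod>j<N. indicator {0..pi} (\<theta> j) * B j)"
      unfolding \<mu>_def by (rule product_integrable_prod) (auto intro!: int_bdd[where B="\<bar>B _\<bar>"])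
    then show ?thesis unfolding G_def by (rule Bochner_Integration.integrable_mult_right)
  qed
  have Tbnd: "\<bar>T l \<theta>\<bar> \<le> P l / den a N l * G \<theta>" if l: "l \<in> JN N" for l \<theta>
  proof -
    have c0: "0 \<le> P l / den a N l" using P0[OF l] den_ge1[OF l, of a] by simp
    have "\<bar>numM a N l \<theta> * (\<Prod>j<N. h j (\<theta> j))\<bar>
        = \<bar>\<Sum>p\<in>{p. p permutes {0..<N}}. signof p * (\<Prod>j<N. A l (inv_into UNIV p j) (\<theta> j) * h j (\<theta> j))\<bar>"
      unfolding numM_eq det_expand ..
    also have "\<dots> \<le> (\<Sum>p\<in>{p. p permutes {0..<N}}. \<bar>signof p * (\<Prod>j<N. A l (inv_into UNIV p j) (\<theta> j) * h j (\<theta> j))\<bar>)"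
      by (rule sum_abs)
    also have "\<dots> \<le> (\<Sum>p\<in>{p. p permutes {0..<N}}. (\<Prod>j<N. indicator {0..pi} (\<theta> j) * B j))"
    proof (rule sum_mono)
      fix p
      have "\<bar>signof p * (\<Prod>j<N. A l (inv_into UNIV p j) (\<theta> j) * h j (\<theta> j))\<bar>
          = (\<Prod>j<N. \<bar>A l (inv_into UNIV p j) (\<theta> j) * h j (\<theta> j)\<bar>)"
        by (simp add: abs_mult abs_prod_real sign_def)
      also have "\<dots> \<le> (\<Prod>j<N. indicator {0..pi} (\<theta> j) * B j)"
        by (intro prod_mono conjI abs_ge_zero) (unfold A_def h_def B_def, rule bound_way1)
      finally show "\<bar>signof p * (\<Prod>j<N. A l (inv_into UNIV p j) (\<theta> j) * h j (\<theta> j))\<bar> \<le> (\<Prod>j<N. indicator {0..pi} (\<theta> j) * B j)" .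
    qed
    also have "\<dots> = G \<theta>" unfolding G_def by simp
    finally have "\<bar>numM a N l \<theta> * (\<Prod>j<N. h j (\<theta> j))\<bar> \<le> G \<theta>" .
    then have "P l / den a N l * \<bar>numM a N l \<theta> * (\<Prod>j<N. h j (\<theta> j))\<bar> \<le> P l / den a N l * G \<theta>"
      using c0 by (rule mult_left_mono)
    moreover have "T l \<theta> = (P l / den a N l) * (numM a N l \<theta> * (\<Prod>j<N. h j (\<theta> j)))"
      unfolding T_def by simp
    ultimately show ?thesis using c0 P0[OF l] den_ge1[OF l, of a] by (simp add: abs_mult)
  qed
  have csum: "(\<lambda>l. P l / den a N l) summable_on JN N"
  proof (rule summable_on_comparison_test[OF has_sum_imp_summable[OF Psum]])
    fix l assume l: "l \<in> JN N"
    have d: "1 \<le> den a N l" by (rule den_ge1[OF l])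
    show "0 \<le> P l / den a N l" using P0[OF l] d by simp
    have "P l / den a N l \<le> P l / 1" using P0[OF l] d by (intro divide_left_mono) auto
    then show "P l / den a N l \<le> P l" by simp
  qed
  have hsI: "((\<lambda>l. integral\<^sup>L \<mu> (T l)) has_sum integral\<^sup>L \<mu> S) (JN N)"
  proof (rule has_sum_integral[OF hs Tint Tbnd Gint csum])
    fix l assume l: "l \<in> JN N"
    have "1 \<le> den a N l" by (rule den_ge1[OF l])
    then show "0 \<le> P l / den a N l" using P0[OF l] by simp
  qed
  have "((\<lambda>l. if l = lam then v else 0) has_sum integral\<^sup>L \<mu> S) (JN N)"
    using hsI by (subst (asm) has_sum_cong[where g="\<lambda>l. if l = lam then v else 0"]) (auto simp: Tval)
  then have way1: "integral\<^sup>L \<mu> S = v" using delta_has_sum[OF kap, of v] has_sum_unique by blast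
  define A2 where "A2 i t = (2 * cos (t::real)) ^ (N - 1 - i)" for i t
  define h2 where "h2 j t = E_omega \<alpha> \<beta> \<delta> (cos t) * h j t" for j t
  have Seq: "S = (\<lambda>\<theta>. Determinant.det (Matrix.mat N N (\<lambda>(i, j). A2 i (\<theta> j))) * (\<Prod>j<N. h2 j (\<theta> j)))"
    unfolding S_def char_denom_def A2_def h2_def by (simp add: prod.distrib mult.assoc fun_eq_iff)
  have A2h2: "A2 i t * h2 j t = (2 * cos t) ^ (N - Suc i) * (E_omega \<alpha> \<beta> \<delta> (cos t) * (indicator {0..pi} t * phi a (k j) t * wt a t))" for i j t
    unfolding A2_def h2_def h_def by simp
  have intA2': "integrable lborel (\<lambda>t. A2 i t * h2 j t)" for i j
    unfolding A2h2 by (rule int_way2(1)[OF O a])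
  define X where "X i j = 2 ^ (N - Suc i) * nu a (k j) * f_fun \<alpha> \<beta> \<delta> N a (Suc i) (k j)" for i j
  have valA2: "integral\<^sup>L lborel (\<lambda>t. A2 i t * h2 j t) = X i j" for i j
    unfolding A2h2 X_def using int_way2(2)[OF O a, where j="Suc i" and k="k j" and N=N] by (simp add: mult.assoc)
  define Dt where "Dt = Determinant.det (Matrix.mat N N (\<lambda>(i, j). f_fun \<alpha> \<beta> \<delta> N a (j + 1) (lam ! i + (N - 1 - i))))"
  define Q where "Q = (\<Prod>j<N. nu a (k j))"
  have Q0: "Q > 0" unfolding Q_def by (intro prod_pos) (auto intro: nu_pos)
  have "integral\<^sup>L \<mu> S = (\<Sum>p\<in>{p. p permutes {0..<N}}. signof p * (\<Prod>j<N. integral\<^sup>L lborel (\<lambda>t. A2 (inv_into UNIV p j) t * h2 j t)))"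
    unfolding Seq \<mu>_def by (rule int_expand(2)[OF intA2'])
  also have "\<dots> = (\<Sum>p\<in>{p. p permutes {0..<N}}. signof p * (\<Prod>j<N. X (inv_into UNIV p j) j))"
    by (simp only: valA2)
  also have "\<dots> = Determinant.det (Matrix.mat N N (\<lambda>(i, j). X i j))"
    by (rule det_inv_form[symmetric])
  also have "\<dots> = (\<Prod>i<N. (2::real) ^ (N - Suc i)) * (\<Prod>j<N. nu a (k j)) *
      Determinant.det (Matrix.mat N N (\<lambda>(i, j). f_fun \<alpha> \<beta> \<delta> N a (Suc i) (k j)))"
    unfolding X_def by (rule det_scale)
  also have "Determinant.det (Matrix.mat N N (\<lambda>(i, j). f_fun \<alpha> \<beta> \<delta> N a (Suc i) (k j))) = Dt"
    unfolding Dt_def k_def lv_def by (subst det_transp_eq) simp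
  also have "(\<Prod>i<N. (2::real) ^ (N - Suc i)) = 2 powr (real N * (real N - 1) / 2)"
    using pow2_prod[of N] by simp
  finally have way2: "integral\<^sup>L \<mu> S = 2 powr (real N * (real N - 1) / 2) * Q * Dt" unfolding Q_def .
  have "v = P lam / den a N lam * (sa a ^ N * Q)"
    unfolding v_def Q_def by (simp add: prod.distrib)
  with way1 way2 have key: "P lam / den a N lam * sa a ^ N * Q = 2 powr (real N * (real N - 1) / 2) * Q * Dt"
    by (simp add: mult.assoc)
  then have key2: "P lam / den a N lam * sa a ^ N = 2 powr (real N * (real N - 1) / 2) * Dt"
    using Q0 by (metis (no_types, lifting) mult.commute mult.left_commute mult_cancel_left less_irrefl)
  show ?thesis
  proof (cases "a = 1/2")
    case True
    have "P lam = 2 powr (real N * (real N - 1) / 2) * Dt * dimB N lam"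
      using key2 dimB_ge1[OF kap] unfolding den_def sa_def True by (simp add: field_simps)
    then show ?thesis unfolding C_const_def dim_a_def Dt_def True by (simp add: mult_ac)
  next
    case False
    have d: "dimD N lam \<ge> 1" by (rule dimD_ge1[OF kap])
    have "P lam * 2 ^ N = 2 * dimD N lam * 2 powr (real N * (real N - 1) / 2) * Dt"
      using key2 d False unfolding den_def sa_def by (simp add: field_simps)
    moreover have "2 powr ((real N - 2) * (real N - 1) / 2) * 2 ^ N = 2 * 2 powr (real N * (real N - 1) / 2)"
    proof -
      have "2 powr ((real N - 2) * (real N - 1) / 2) * 2 ^ N = 2 powr ((real N - 2) * (real N - 1) / 2 + real N)"
        by (simp add: powr_add powr_realpow)
      also have "(real N - 2) * (real N - 1) / 2 + real N = 1 + real N * (real N - 1) / 2"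
        by (simp add: field_simps)
      also have "2 powr (1 + real N * (real N - 1) / 2) = 2 * 2 powr (real N * (real N - 1) / 2)"
        by (simp add: powr_add)
      finally show ?thesis .
    qed
    ultimately have "P lam * 2 ^ N = 2 powr ((real N - 2) * (real N - 1) / 2) * 2 ^ N * Dt * dimD N lam"
      by (simp add: mult_ac)
    then have "P lam = 2 powr ((real N - 2) * (real N - 1) / 2) * Dt * dimD N lam"
      by simp
    then show ?thesis unfolding C_const_def dim_a_def Dt_def using False by (simp add: mult_ac)
  qed
qed

end
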